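(* There exist absolute constants $c_1,c_2,c_3>0$ such that for all integers $b\ge1$ and $\ell\ge1$ the graph $G_{b,\ell}$ satisfies: (i) $2^{b\ell+c_1(b+\log\ell)}\le|V(G_{b,\ell})|\le 2^{b\ell+c_2(b+\log \ell)}$; (ii) $G_{b,\ell}$ has maximum degree $3$; (iii) every hub labeling $\{S_v\}$ of $G_{b,\ell}$ satisfies $\frac{1}{|V(G_{b,\ell})|}\sum_{v\in V(G_{b,\ell})}|S_v|\ge 2^{b\ell-c_3(b+\ell)}$.
   Context: Notation $[a,b]=\{a,a+1,\dots,b\}$. Fix integers $b,\ell\ge1$, set $s=2^b$ and $A=3\ell s^2$. The weighted graph $H_{b,\ell}$ has vertex set $V=\bigcup_{i=0}^{2\ell}V_i$ with $V_i=\{v_{i,\vec j}:\vec j\in[0,s-1]^\ell\}$. For $i\in[0,2\ell-1]$ let $c(i)=i+1$ if $i<\ell$ and $c(i)=2\ell-i$ if $i\ge\ell$. There is an edge between $v_{i,\vec j}$ and $v_{i+1,\vec j'}$ iff $j_k=j'_k$ for all $k\ne c(i)$ (so $\vec j,\vec j'$ may differ only in coordinate $c=c(i)$), with weight $A+(j_c-j'_c)^2$; there are no other edges. The unweighted graph $G_{b,\ell}$ is obtained from $H_{b,\ell}$ as follows: every vertex $v\in V_i$ is kept, and gets attached (root adjacent to $v$) a complete binary tree $T^{\mathrm{in}}_v$ of depth $b$ with $s$ leaves, present only if $i>0$, whose leaves are labeled $v^{\mathrm{in}}_u$ for the $s$ neighbors $u\in V_{i-1}$ of $v$ in $H_{b,\ell}$,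 and a complete binary tree $T^{\mathrm{out}}_v$ of depth $b$ with $s$ leaves, present only if $i<2\ell$, whose leaves are labeled $v^{\mathrm{out}}_u$ for the $s$ neighbors $u\in V_{i+1}$ of $v$; all trees are disjoint. For every edge $e=\{u,v\}$ of $H_{b,\ell}$ with $u\in V_i,v\in V_{i+1}$, the leaves $u^{\mathrm{out}}_v$ and $v^{\mathrm{in}}_u$ are joined by a path of length $w(e)-2b-2$ through new auxiliary vertices (so that the $u$–$v$ route through the gadget has length $w(e)$). A hub labeling of a graph is a family of sets $S_v\subseteq V$ such that for every pair $u,v$ at finite distance there is $w\in S_u\cap S_v$ with $\mathrm{dist}(u,w)+\mathrm{dist}(w,v)=\mathrm{dist}(u,v)$. *)

theory Defs
  imports Complex_Main
begin

text \<open>HV i j         : the vertex v_{i,j} of H_{b,l}  (j is a list of length l, coordinate k stored at index k-1)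
  TIn i j d p    : node at depth d (root depth 0, leaves depth b), position p < 2^d, of the tree T^in of v_{i,j}
  TOut i j d p   : same for the tree T^out of v_{i,j}
  Aux i j j' t   : t-th internal vertex of the gadget path of the H-edge {v_{i,j}, v_{i+1,j'}}\<close>
datatype gvert =
    HV nat "nat list"
  | TIn nat "nat list" nat nat
  | TOut nat "nat list" nat nat
  | Aux nat "nat list" "nat list" nat

definition cfun :: "nat \<Rightarrow> nat \<Rightarrow> nat" where
  "cfun l i = (if i < l then i + 1 else 2 * l - i)"

definition validj :: "nat \<Rightarrow> nat \<Rightarrow> nat list \<Rightarrow> bool" where
  "validj b l j \<longleftrightarrow> length j = l \<and> (\<forall>x\<in>set j. x < 2 ^ b)"

definition Hadj :: "nat \<Rightarrow> nat \<Rightarrow> nat \<Rightarrow> nat list \<Rightarrow> nat list \<Rightarrow> bool" where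
  "Hadj b l i j j' \<longleftrightarrow> i < 2 * l \<and> validj b l j \<and> validj b l j'
     \<and> (\<forall>k<l. k \<noteq> cfun l i - 1 \<longrightarrow> j ! k = j' ! k)"

definition Aconst :: "nat \<Rightarrow> nat \<Rightarrow> nat" where
  "Aconst b l = 3 * l * (2 ^ b) ^ 2"

definition Hweight :: "nat \<Rightarrow> nat \<Rightarrow> nat \<Rightarrow> nat list \<Rightarrow> nat list \<Rightarrow> nat" where
  "Hweight b l i j j' = nat (int (Aconst b l)
      + (int (j ! (cfun l i - 1)) - int (j' ! (cfun l i - 1))) ^ 2)"

text \<open>Length of the gadget path joining the two leaves: w(e) - 2b - 2.\<close>
definition plen :: "nat \<Rightarrow> nat \<Rightarrow> nat \<Rightarrow> nat list \<Rightarrow> nat list \<Rightarrow> nat" where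
  "plen b l i j j' = Hweight b l i j j' - 2 * b - 2"

text \<open>Leaf labelling: sigma True i j x is the leaf position in T^in_{v_{i,j}} of the neighbour
  u in V_{i-1} whose coordinate c(i-1) equals x; sigma False i j x is the leaf position in
  T^out_{v_{i,j}} of the neighbour u in V_{i+1} whose coordinate c(i) equals x.
  The paper leaves this bijection unspecified, so it is an arbitrary valid one.\<close>
definition valid_labeling :: "nat \<Rightarrow> nat \<Rightarrow> (bool \<Rightarrow> nat \<Rightarrow> nat list \<Rightarrow> nat \<Rightarrow> nat) \<Rightarrow> bool" where
  "valid_labeling b l \<sigma> \<longleftrightarrow> (\<forall>i j. validj b l j \<longrightarrow>
      (0 < i \<and> i \<le> 2 * l \<longrightarrow> bij_betw (\<sigma> True i j) {..<2 ^ b} {..<2 ^ b}) \<and>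
      (i < 2 * l \<longrightarrow> bij_betw (\<sigma> False i j) {..<2 ^ b} {..<2 ^ b}))"

definition pnode :: "nat \<Rightarrow> nat \<Rightarrow> (bool \<Rightarrow> nat \<Rightarrow> nat list \<Rightarrow> nat \<Rightarrow> nat) \<Rightarrow>
    nat \<Rightarrow> nat list \<Rightarrow> nat list \<Rightarrow> nat \<Rightarrow> gvert" where
  "pnode b l \<sigma> i j j' t =
     (if t = 0 then TOut i j b (\<sigma> False i j (j' ! (cfun l i - 1)))
      else if t = plen b l i j j' then TIn (Suc i) j' b (\<sigma> True (Suc i) j' (j ! (cfun l i - 1)))
      else Aux i j j' t)"

definition GV :: "nat \<Rightarrow> nat \<Rightarrow> gvert set" where
  "GV b l =
     {HV i j | i j. i \<le> 2 * l \<and> validj b l j}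
   \<union> {TIn i j d p | i j d p. 0 < i \<and> i \<le> 2 * l \<and> validj b l j \<and> d \<le> b \<and> p < 2 ^ d}
   \<union> {TOut i j d p | i j d p. i < 2 * l \<and> validj b l j \<and> d \<le> b \<and> p < 2 ^ d}
   \<union> {Aux i j j' t | i j j' t. Hadj b l i j j' \<and> 0 < t \<and> t < plen b l i j j'}"

definition GB :: "nat \<Rightarrow> nat \<Rightarrow> (bool \<Rightarrow> nat \<Rightarrow> nat list \<Rightarrow> nat \<Rightarrow> nat) \<Rightarrow> (gvert \<times> gvert) set" where
  "GB b l \<sigma> =
     {(HV i j, TIn i j 0 0) | i j. 0 < i \<and> i \<le> 2 * l \<and> validj b l j}
   \<union> {(HV i j, TOut i j 0 0) | i j. i < 2 * l \<and> validj b l j}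
   \<union> {(TIn i j d p, TIn i j (Suc d) q) | i j d p q.
        0 < i \<and> i \<le> 2 * l \<and> validj b l j \<and> d < b \<and> p < 2 ^ d \<and> (q = 2 * p \<or> q = 2 * p + 1)}
   \<union> {(TOut i j d p, TOut i j (Suc d) q) | i j d p q.
        i < 2 * l \<and> validj b l j \<and> d < b \<and> p < 2 ^ d \<and> (q = 2 * p \<or> q = 2 * p + 1)}
   \<union> {(pnode b l \<sigma> i j j' t, pnode b l \<sigma> i j j' (Suc t)) | i j j' t.
        Hadj b l i j j' \<and> t < plen b l i j j'}"

definition GE :: "nat \<Rightarrow> nat \<Rightarrow> (bool \<Rightarrow> nat \<Rightarrow> nat list \<Rightarrow> nat \<Rightarrow> nat) \<Rightarrow> (gvert \<times> gvert) set" where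
  "GE b l \<sigma> = GB b l \<sigma> \<union> (GB b l \<sigma>)\<inverse>"

text \<open>Graph distance (number of edges of a shortest walk); meaningful when (u,v) \<in> E^*.\<close>
definition gdist :: "('a \<times> 'a) set \<Rightarrow> 'a \<Rightarrow> 'a \<Rightarrow> nat" where
  "gdist E u v = (LEAST n. (u, v) \<in> E ^^ n)"

definition degree :: "('a \<times> 'a) set \<Rightarrow> 'a \<Rightarrow> nat" where
  "degree E v = card {u. (v, u) \<in> E}"

definition hub_labeling :: "'a set \<Rightarrow> ('a \<times> 'a) set \<Rightarrow> ('a \<Rightarrow> 'a set) \<Rightarrow> bool" where
  "hub_labeling V E S \<longleftrightarrow> (\<forall>v\<in>V. S v \<subseteq> V) \<and>
     (\<forall>u\<in>V. \<forall>v\<in>V. (u, v) \<in> E\<^sup>* \<longrightarrow>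
        (\<exists>w\<in>S u \<inter> S v. gdist E u w + gdist E w v = gdist E u v))"

end

theory Submission
  imports Defs
begin

definition hh :: "int \<Rightarrow> int" where "hh d = d^2 div 2"
definition cst :: "nat \<Rightarrow> nat \<Rightarrow> nat \<Rightarrow> int \<Rightarrow> int" where
  "cst l i k d = (if k + i < 2*l then d^2 else hh d)"
definition vld :: "nat \<Rightarrow> nat \<Rightarrow> nat list \<Rightarrow> nat list \<Rightarrow> bool" where
  "vld l i a y \<longleftrightarrow> (\<forall>k<l. i \<le> k \<longrightarrow> y!k = a!k)"
definition phi :: "nat \<Rightarrow> nat \<Rightarrow> nat list \<Rightarrow> nat \<Rightarrow> nat list \<Rightarrow> int" where
  "phi b l a i y = (if vld l i a y
      then int i * int (Aconst b l) + (\<Sum>k<l. cst l i k (int (y!k) - int (a!k)))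
      else (int i + 2) * int (Aconst b l) - (4 * int b + 4))"

lemma hh_nonneg: "0 \<le> hh d" by (simp add: hh_def)
lemma hh_le: "2 * hh d \<le> d^2" by (simp add: hh_def)
lemma hh_le': "hh d \<le> d^2" using hh_le[of d] hh_nonneg[of d] by linarith
lemma hh_neg: "hh (-d) = hh d" by (simp add: hh_def)
lemma hh_even: "even d \<Longrightarrow> 2 * hh d = d^2"
  by (auto simp: hh_def power2_eq_square)
lemma hh_sum: "hh (y - a) \<le> (z - a)^2 + (y - z)^2"
proof -
  have "(y - a)^2 \<le> 2 * ((z - a)^2 + (y - z)^2)"
  proof -
    have "2 * ((z - a)^2 + (y - z)^2) = (y-a)^2 + (2*z - a - y)^2"
      by (simp add: power2_eq_square algebra_simps)
    then show ?thesis by simp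
  qed
  then have "(y - a)^2 div 2 \<le> (2 * ((z - a)^2 + (y - z)^2)) div 2"
    by (rule zdiv_mono1) auto
  then show ?thesis unfolding hh_def by simp
qed

lemma cst_nonneg: "0 \<le> cst l i k d" by (simp add: cst_def hh_nonneg)
lemma cst_le: "cst l i k d \<le> d^2" by (simp add: cst_def hh_le')

lemma sq_bound:
  assumes "x < (2::nat)^b" "y < 2^b"
  shows "(int x - int y)^2 \<le> (2^b)^2"
proof -
  have "int x < 2^b" "int y < 2^b" using assms by (metis of_nat_less_iff of_nat_numeral of_nat_power)+
  then have "\<bar>int x - int y\<bar> \<le> 2^b" by linarith
  then have "\<bar>int x - int y\<bar>^2 \<le> (2^b)^2"
    by (intro power_mono) auto
  then show ?thesis by simp
qed

lemma validjD: "validj b l j \<Longrightarrow> k < l \<Longrightarrow> j!k < 2^b"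
  by (auto simp: validj_def)
lemma validj_len: "validj b l j \<Longrightarrow> length j = l"
  by (auto simp: validj_def)

lemma sum_swap1:
  fixes f g :: "nat \<Rightarrow> int"
  assumes "c < l" "\<forall>k<l. k \<noteq> c \<longrightarrow> f k = g k"
  shows "(\<Sum>k<l. g k) = (\<Sum>k<l. f k) - f c + g c"
proof -
  have "(\<Sum>k<l. g k) = g c + (\<Sum>k\<in>{..<l}-{c}. g k)"
    using assms(1) by (simp add: sum.remove)
  moreover have "(\<Sum>k<l. f k) = f c + (\<Sum>k\<in>{..<l}-{c}. f k)"
    using assms(1) by (simp add: sum.remove)
  moreover have "(\<Sum>k\<in>{..<l}-{c}. g k) = (\<Sum>k\<in>{..<l}-{c}. f k)"
    using assms(2) by (intro sum.cong) auto
  ultimately show ?thesis by simp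
qed

lemma sumcst_bound:
  assumes "validj b l a" "validj b l y"
  shows "0 \<le> (\<Sum>k<l. cst l i k (int (y!k) - int (a!k)))"
    "(\<Sum>k<l. cst l i k (int (y!k) - int (a!k))) \<le> int l * (2^b)^2"
proof -
  show "0 \<le> (\<Sum>k<l. cst l i k (int (y!k) - int (a!k)))"
    by (intro sum_nonneg) (simp add: cst_nonneg)
  have "(\<Sum>k<l. cst l i k (int (y!k) - int (a!k))) \<le> (\<Sum>k<l. (2^b)^2)"
  proof (intro sum_mono)
    fix k assume "k \<in> {..<l}"
    then have "y!k < 2^b" "a!k < 2^b" using assms validjD by auto
    then show "cst l i k (int (y!k) - int (a!k)) \<le> (2^b)^2"
      using cst_le sq_bound order_trans by blast
  qed
  then show "(\<Sum>k<l. cst l i k (int (y!k) - int (a!k))) \<le> int l * (2^b)^2" by simp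
qed

lemma b_pow: "b + 1 \<le> (2::nat)^b"
  by (induction b) auto

lemma K_le: "1 \<le> b \<Longrightarrow> 4 * int b + 4 \<le> 2 * (2^b)^2"
proof -
  assume "1 \<le> b"
  have "b + 1 \<le> (2::nat)^b" by (rule b_pow)
  moreover have "(2::nat) \<le> 2^b" using \<open>1 \<le> b\<close>
    using power_increasing[of 1 b "2::nat"] by simp
  ultimately have "4 * (b+1) \<le> 2 * (2^b * (2::nat)^b)"
  proof -
    have "4 * (b+1) \<le> 4 * (2::nat)^b" using \<open>b + 1 \<le> 2^b\<close> by simp
    also have "\<dots> \<le> 2 * (2^b * 2^b)" using \<open>(2::nat) \<le> 2^b\<close>
      using mult_le_mono1[of 2 "2^b" "2*2^b"] by (simp add: algebra_simps)
    finally show ?thesis .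
  qed
  then have "int (4 * (b+1)) \<le> int (2 * (2^b * 2^b))" by linarith
  then show ?thesis by (simp add: power2_eq_square)
qed

lemma A_def': "int (Aconst b l) = 3 * int l * (2^b)^2"
  by (simp add: Aconst_def)

lemma cfun_lt: "i < 2*l \<Longrightarrow> cfun l i - 1 < l"
  by (auto simp: cfun_def)
lemma cfun_lo: "i < l \<Longrightarrow> cfun l i - 1 = i"
  by (auto simp: cfun_def)
lemma cfun_hi: "l \<le> i \<Longrightarrow> i < 2*l \<Longrightarrow> cfun l i - 1 = 2*l - i - 1"
  by (auto simp: cfun_def)

lemma Hweight_int: "int (Hweight b l i j j') = int (Aconst b l) + (int (j!(cfun l i - 1)) - int (j'!(cfun l i - 1)))^2"
  by (simp add: Hweight_def)

lemma phi_valid: "vld l i a y \<Longrightarrow> phi b l a i y = int i * int (Aconst b l) + (\<Sum>k<l. cst l i k (int (y!k) - int (a!k)))"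
  by (simp add: phi_def)
lemma phi_invalid: "\<not> vld l i a y \<Longrightarrow> phi b l a i y = (int i + 2) * int (Aconst b l) - (4 * int b + 4)"
  by (simp add: phi_def)

lemma phi_lip:
  assumes H: "Hadj b l i j j'" and va: "validj b l a" and b1: "1 \<le> b"
  shows "phi b l a (Suc i) j' - phi b l a i j \<le> int (Hweight b l i j j')"
    and "phi b l a i j - phi b l a (Suc i) j' \<le> int (Hweight b l i j j') - (4 * int b + 4)"
proof -
  define c where "c = cfun l i - 1"
  define A where "A = int (Aconst b l)"
  define S where "S = (2::int)^b"
  define K where "K = 4 * int b + 4"
  have i2: "i < 2*l" and vj: "validj b l j" and vj': "validj b l j'"
    and agr: "\<forall>k<l. k \<noteq> c \<longrightarrow> j!k = j'!k"
    using H by (auto simp: Hadj_def c_def)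
  have l1: "1 \<le> l" using i2 by simp
  have cl: "c < l" using cfun_lt[OF i2] c_def by simp
  have Adef: "A = 3 * int l * S^2" by (simp add: A_def S_def A_def')
  have KS: "K \<le> 2 * S^2" using K_le[OF b1] by (simp add: K_def S_def)
  have S0: "0 \<le> S^2" by simp
  have "3 * S^2 * 1 \<le> 3 * S^2 * int l" by (rule mult_left_mono) (use l1 in auto)
  then have AS3: "3 * S^2 \<le> A" using Adef by (simp add: algebra_simps)
  have AS: "S^2 \<le> A" using AS3 S0 by linarith
  have w: "int (Hweight b l i j j') = A + (int (j!c) - int (j'!c))^2"
    using Hweight_int c_def A_def by simp
  have wA: "A \<le> int (Hweight b l i j j')" using w by simp
  define T where "T = (\<lambda>k. cst l i k (int (j!k) - int (a!k)))"
  define T' where "T' = (\<lambda>k. cst l (Suc i) k (int (j'!k) - int (a!k)))"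
  have bnd: "0 \<le> sum T {..<l}" "sum T {..<l} \<le> int l * S^2"
            "0 \<le> sum T' {..<l}" "sum T' {..<l} \<le> int l * S^2"
    using sumcst_bound[OF va vj, of i] sumcst_bound[OF va vj', of "Suc i"]
    by (simp_all add: T_def T'_def S_def)
  have lS: "int l * S^2 \<le> A" using Adef S0 by (simp add: mult_right_mono)
  have main: "phi b l a (Suc i) j' - phi b l a i j \<le> int (Hweight b l i j j')
    \<and> phi b l a i j - phi b l a (Suc i) j' \<le> int (Hweight b l i j j') - K"
  proof (cases "vld l i a j")
    case True
    have vs: "vld l (Suc i) a j'"
      unfolding vld_def
    proof (intro allI impI)
      fix k assume k: "k < l" "Suc i \<le> k"
      have "k \<noteq> c" using k cl c_def cfun_lo cfun_hi[of l i] i2 by (cases "i < l") auto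
      then show "j'!k = a!k" using agr k True unfolding vld_def by auto
    qed
    have oth: "\<forall>k<l. k \<noteq> c \<longrightarrow> T k = T' k"
    proof (intro allI impI)
      fix k assume k: "k < l" "k \<noteq> c"
      have "(k + i < 2*l) = (k + Suc i < 2*l)"
        using k cl c_def cfun_lo cfun_hi[of l i] i2 by (cases "i < l") auto
      then show "T k = T' k" using agr k by (simp add: T_def T'_def cst_def)
    qed
    have sw: "sum T' {..<l} = sum T {..<l} - T c + T' c" by (rule sum_swap1[OF cl oth])
    have pd: "phi b l a (Suc i) j' - phi b l a i j = A + T' c - T c"
      using sw phi_valid[OF True] phi_valid[OF vs] by (simp add: T_def T'_def A_def algebra_simps)
    have jc: "j!c < 2^b" "j'!c < 2^b" "a!c < 2^b" using validjD cl vj vj' va by auto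
    show ?thesis
    proof (cases "i < l")
      case True2: True
      have ci: "c = i" using cfun_lo[OF True2] c_def by simp
      have "j!c = a!c" using \<open>vld l i a j\<close> cl ci unfolding vld_def by auto
      then have "T c = 0" "T' c = (int (j!c) - int (j'!c))^2"
        using True2 ci by (auto simp: T_def T'_def cst_def power2_commute)
      moreover have "0 \<le> (int (j!c) - int (j'!c))^2" by simp
      ultimately show ?thesis using pd w KS AS by linarith
    next
      case False
      have ci: "c = 2*l - i - 1" using cfun_hi[of l i] False i2 c_def by simp
      have "T c = (int (j!c) - int (a!c))^2" "T' c = hh (int (j'!c) - int (a!c))"
        using False ci i2 by (auto simp: T_def T'_def cst_def)
      moreover have "hh (int (j'!c) - int (a!c)) \<le> (int (j!c) - int (a!c))^2 + (int (j'!c) - int (j!c))^2"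
        by (rule hh_sum)
      moreover have "(int (j!c) - int (a!c))^2 \<le> S^2" using sq_bound jc S_def by simp
      moreover have "0 \<le> hh (int (j'!c) - int (a!c))" by (rule hh_nonneg)
      moreover have "0 \<le> (int (j!c) - int (j'!c))^2" by simp
      moreover have "(int (j'!c) - int (j!c))^2 = (int (j!c) - int (j'!c))^2" by (rule power2_commute)
      ultimately show ?thesis using pd w KS AS3 by linarith
    qed
  next
    case False
    have il: "i < l"
    proof (rule ccontr)
      assume "\<not> i < l"
      then have "vld l i a j" by (auto simp: vld_def)
      then show False using False by simp
    qed
    show ?thesis
    proof (cases "vld l (Suc i) a j'")
      case True
      have "phi b l a (Suc i) j' = int (Suc i) * A + sum T' {..<l}"
        using phi_valid[OF True] by (simp add: T'_def A_def)
      moreover have "phi b l a i j = (int i + 2) * A - K"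
        using phi_invalid[OF False] by (simp add: A_def K_def)
      moreover have sq0: "0 \<le> (int (j!c) - int (j'!c))^2" by simp
      ultimately show ?thesis using bnd wA KS lS w AS3
        by (simp add: algebra_simps) (use sq0 in linarith)
    next
      case F2: False
      have "phi b l a (Suc i) j' = (int (Suc i) + 2) * A - K"
        using phi_invalid[OF F2] by (simp add: A_def K_def)
      moreover have "phi b l a i j = (int i + 2) * A - K"
        using phi_invalid[OF False] by (simp add: A_def K_def)
      ultimately show ?thesis using wA KS AS3 by (simp add: algebra_simps) (use S0 in linarith)
    qed
  qed
  then show "phi b l a (Suc i) j' - phi b l a i j \<le> int (Hweight b l i j j')"
    "phi b l a i j - phi b l a (Suc i) j' \<le> int (Hweight b l i j j') - (4 * int b + 4)"
    by (auto simp: K_def)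
qed

definition Dv :: "nat \<Rightarrow> nat \<Rightarrow> nat list \<Rightarrow> nat list \<Rightarrow> int" where
  "Dv b l a a' = int (2*l) * int (Aconst b l) + (\<Sum>k<l. hh (int (a'!k) - int (a!k)))"

definition Rt :: "nat \<Rightarrow> nat list \<Rightarrow> nat list \<Rightarrow> nat \<Rightarrow> nat list \<Rightarrow> bool" where
  "Rt l a a' i y \<longleftrightarrow> (\<forall>k<l. (k < i \<and> k + i < 2*l \<longrightarrow> 2 * y!k = a!k + a'!k)
      \<and> (i \<le> k \<longrightarrow> y!k = a!k) \<and> (2*l \<le> k + i \<longrightarrow> y!k = a'!k))"

lemma A_ge: "1 \<le> l \<Longrightarrow> 3 * (2^b)^2 \<le> int (Aconst b l)"
proof -
  assume l1: "1 \<le> l"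
  have "3 * ((2::int)^b)^2 * 1 \<le> 3 * (2^b)^2 * int l" by (rule mult_left_mono) (use l1 in auto)
  then show ?thesis by (simp add: A_def' algebra_simps)
qed

lemma lS_le_A: "int l * (2^b)^2 \<le> int (Aconst b l)"
proof -
  have "int l * ((2::int)^b)^2 * 1 \<le> int l * (2^b)^2 * 3" by (rule mult_left_mono) auto
  then show ?thesis by (simp add: A_def' algebra_simps)
qed

lemma phi_ge:
  assumes "validj b l a" "validj b l y" "1 \<le> b"
  shows "int i * int (Aconst b l) \<le> phi b l a i y"
proof (cases "vld l i a y")
  case True
  then show ?thesis using phi_valid[OF True] sumcst_bound(1)[OF assms(1,2)] by simp
next
  case False
  have "l \<noteq> 0" using False by (auto simp: vld_def)
  then have "3 * (2^b)^2 \<le> int (Aconst b l)" using A_ge[of l b] by simp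
  moreover have "(0::int) \<le> (2^b)^2" by simp
  ultimately have "4 * int b + 4 \<le> 2 * int (Aconst b l)"
    using K_le[OF assms(3)] by linarith
  then show ?thesis using phi_invalid[OF False, where b=b] by (simp add: algebra_simps)
qed

lemma Dv_bound:
  assumes "validj b l a" "validj b l a'"
  shows "Dv b l a a' \<le> int (2*l) * int (Aconst b l) + int l * (2^b)^2"
proof -
  have "(\<Sum>k<l. hh (int (a'!k) - int (a!k))) \<le> (\<Sum>k<l. (2^b)^2)"
  proof (intro sum_mono)
    fix k assume "k \<in> {..<l}"
    then have "a'!k < 2^b" "a!k < 2^b" using assms validjD by auto
    then show "hh (int (a'!k) - int (a!k)) \<le> (2^b)^2"
      using hh_le' sq_bound order_trans by blast
  qed
  then show ?thesis by (simp add: Dv_def)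
qed

lemma phi_sum:
  assumes va: "validj b l a" and va': "validj b l a'" and vy: "validj b l y"
    and i2: "i \<le> 2*l" and b1: "1 \<le> b"
  shows "Dv b l a a' \<le> phi b l a i y + phi b l a' (2*l - i) y"
    and "phi b l a i y + phi b l a' (2*l - i) y \<le> Dv b l a a' \<Longrightarrow> (\<forall>k<l. even (a!k + a'!k))
          \<Longrightarrow> Rt l a a' i y"
proof -
  define A where "A = int (Aconst b l)"
  define S where "S = (2::int)^b"
  define K where "K = 4 * int b + 4"
  have KS: "K \<le> 2 * S^2" using K_le[OF b1] by (simp add: K_def S_def)
  have S0: "0 < S^2" by (simp add: S_def)
  have lA: "int l * S^2 \<le> A" using lS_le_A by (simp add: A_def S_def)
  have DB: "Dv b l a a' \<le> 2 * int l * A + int l * S^2" using Dv_bound[OF va va'] by (simp add: A_def S_def)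
  have i2': "int (2*l - i) = 2 * int l - int i" using i2 by simp
  have l1: "1 \<le> l \<or> i = 0" using i2 by auto
  define T where "T = (\<lambda>k. cst l i k (int (y!k) - int (a!k)) + cst l (2*l-i) k (int (y!k) - int (a'!k)))"
  define H where "H = (\<lambda>k. hh (int (a'!k) - int (a!k)))"
  have main: "Dv b l a a' < phi b l a i y + phi b l a' (2*l - i) y \<or>
      (vld l i a y \<and> vld l (2*l-i) a' y \<and> phi b l a i y + phi b l a' (2*l - i) y = 2 * int l * A + sum T {..<l})"
  proof (cases "vld l i a y")
    case False
    then have "l \<noteq> 0" by (auto simp: vld_def)
    then have AS3: "3 * S^2 \<le> A" using A_ge[of l b] by (simp add: A_def S_def)
    have "int (2*l - i) * A \<le> phi b l a' (2*l - i) y" using phi_ge[OF va' vy b1] by (simp add: A_def)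
    moreover have "phi b l a i y = (int i + 2) * A - K" using phi_invalid[OF False] by (simp add: A_def K_def)
    ultimately have "2 * int l * A + 2 * A - K \<le> phi b l a i y + phi b l a' (2*l - i) y"
      using i2' by (simp add: algebra_simps)
    then show ?thesis using DB KS AS3 lA S0 by linarith
  next
    case True
    show ?thesis
    proof (cases "vld l (2*l-i) a' y")
      case False
      then have "l \<noteq> 0" by (auto simp: vld_def)
      then have AS3: "3 * S^2 \<le> A" using A_ge[of l b] by (simp add: A_def S_def)
      have "int i * A \<le> phi b l a i y" using phi_ge[OF va vy b1] by (simp add: A_def)
      moreover have "phi b l a' (2*l-i) y = (int (2*l-i) + 2) * A - K" using phi_invalid[OF False] by (simp add: A_def K_def)
      ultimately have "2 * int l * A + 2 * A - K \<le> phi b l a i y + phi b l a' (2*l - i) y"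
        using i2' by (simp add: algebra_simps)
      then show ?thesis using DB KS AS3 lA S0 by linarith
    next
      case True2: True
      have "phi b l a i y + phi b l a' (2*l - i) y = int i * A + int (2*l-i) * A + sum T {..<l}"
        using phi_valid[OF True] phi_valid[OF True2] by (simp add: A_def T_def sum.distrib)
      then show ?thesis using True True2 i2' by (simp add: algebra_simps)
    qed
  qed
  have TH: "\<And>k. k < l \<Longrightarrow> vld l i a y \<Longrightarrow> vld l (2*l-i) a' y \<Longrightarrow> H k \<le> T k
     \<and> (T k = H k \<longrightarrow> even (a!k + a'!k) \<longrightarrow> (k < i \<and> k + i < 2*l \<longrightarrow> 2 * y!k = a!k + a'!k))"
  proof -
    fix k assume k: "k < l" and v1: "vld l i a y" and v2: "vld l (2*l-i) a' y"
    show "H k \<le> T k \<and> (T k = H k \<longrightarrow> even (a!k + a'!k) \<longrightarrow> (k < i \<and> k + i < 2*l \<longrightarrow> 2 * y!k = a!k + a'!k))"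
    proof (cases "k < i")
      case True
      show ?thesis
      proof (cases "k + i < 2*l")
        case True2: True
        have "k + (2*l - i) < 2*l" using True i2 by arith
        then have Tk: "T k = (int (y!k) - int (a!k))^2 + (int (y!k) - int (a'!k))^2"
          using True True2 i2 by (simp add: T_def cst_def)
        have h1: "H k \<le> T k" using hh_sum[of "int (a'!k)" "int (a!k)" "int (y!k)"] Tk
          by (simp add: H_def power2_commute)
        have "2 * T k = (int (a'!k) - int (a!k))^2 + (2 * int (y!k) - int (a!k) - int (a'!k))^2"
          unfolding Tk by (simp add: power2_eq_square algebra_simps)
        moreover have "even (a!k + a'!k) \<Longrightarrow> 2 * H k = (int (a'!k) - int (a!k))^2"
          unfolding H_def by (rule hh_even) (simp add: even_add)
        ultimately have "T k = H k \<Longrightarrow> even (a!k + a'!k) \<Longrightarrow> 2 * y!k = a!k + a'!k"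
          by auto
        then show ?thesis using h1 by auto
      next
        case False
        then have "2*l - i \<le> k" by auto
        then have "y!k = a'!k" using v2 k by (auto simp: vld_def)
        then have "T k = H k" using True False i2
          by (simp add: T_def H_def cst_def hh_def)
        then show ?thesis using False by auto
      qed
    next
      case False
      then have "y!k = a!k" using v1 k by (auto simp: vld_def)
      moreover have "\<not> k + (2*l - i) < 2*l" using False i2 by arith
      ultimately have "T k = H k" using False i2 k
        by (simp add: T_def H_def cst_def hh_def power2_commute)
      then show ?thesis using False by auto
    qed
  qed
  have DvH: "Dv b l a a' = 2 * int l * A + sum H {..<l}" by (simp add: Dv_def A_def H_def)
  show "Dv b l a a' \<le> phi b l a i y + phi b l a' (2*l - i) y"
  proof (cases "Dv b l a a' < phi b l a i y + phi b l a' (2*l - i) y")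
    case True then show ?thesis by simp
  next
    case False
    then have v: "vld l i a y" "vld l (2*l-i) a' y"
       and e: "phi b l a i y + phi b l a' (2*l - i) y = 2 * int l * A + sum T {..<l}" using main by auto
    have "sum H {..<l} \<le> sum T {..<l}" using TH v by (intro sum_mono) auto
    then show ?thesis using e DvH by simp
  qed
  assume le: "phi b l a i y + phi b l a' (2*l - i) y \<le> Dv b l a a'" and ev: "\<forall>k<l. even (a!k + a'!k)"
  then have v: "vld l i a y" "vld l (2*l-i) a' y"
       and e: "phi b l a i y + phi b l a' (2*l - i) y = 2 * int l * A + sum T {..<l}" using main by auto
  have eqk: "T k = H k" if k: "k < l" for k
  proof (rule ccontr)
    assume "T k \<noteq> H k"
    then have "H k < T k" using TH[OF k v] by auto
    then have "sum H {..<l} < sum T {..<l}"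
      using TH v k by (intro sum_strict_mono_ex1) auto
    then show False using le e DvH by simp
  qed
  show "Rt l a a' i y"
    unfolding Rt_def
  proof (intro allI impI)
    fix k assume k: "k < l"
    have "k < i \<and> k + i < 2*l \<longrightarrow> 2 * y!k = a!k + a'!k" using TH[OF k v] eqk[OF k] ev k by auto
    moreover have "i \<le> k \<longrightarrow> y!k = a!k" using v(1) k by (auto simp: vld_def)
    moreover have "2*l \<le> k + i \<longrightarrow> y!k = a'!k" using v(2) k by (auto simp: vld_def)
    ultimately show "(k < i \<and> k + i < 2*l \<longrightarrow> 2 * y!k = a!k + a'!k)
      \<and> (i \<le> k \<longrightarrow> y!k = a!k) \<and> (2*l \<le> k + i \<longrightarrow> y!k = a'!k)" by blast
  qed
qed

lemma Rt_inj1: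
  assumes "Rt l a1 a' i y" "Rt l a2 a' i y" "i \<le> l" "length a1 = l" "length a2 = l"
  shows "a1 = a2"
proof (rule nth_equalityI)
  show "length a1 = length a2" using assms by simp
  fix k assume "k < length a1"
  then have k: "k < l" using assms by simp
  show "a1!k = a2!k"
  proof (cases "k < i")
    case True
    then have "k + i < 2*l" using assms(3) k by simp
    then show ?thesis using assms(1,2) k True unfolding Rt_def by fastforce
  next
    case False
    then show ?thesis using assms(1,2) k unfolding Rt_def by fastforce
  qed
qed

lemma Rt_inj2:
  assumes "Rt l a a1' i y" "Rt l a a2' i y" "l \<le> i" "length a1' = l" "length a2' = l"
  shows "a1' = a2'"
proof (rule nth_equalityI)
  show "length a1' = length a2'" using assms by simp
  fix k assume "k < length a1'"
  then have k: "k < l" using assms by simp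
  show "a1'!k = a2'!k"
  proof (cases "2*l \<le> k + i")
    case False
    then have "k < i" using assms(3) k by simp
    then show ?thesis using assms(1,2) k False unfolding Rt_def by fastforce
  next
    case True
    then show ?thesis using assms(1,2) k unfolding Rt_def by fastforce
  qed
qed

lemma phi_step:
  assumes H: "Hadj b l i j j'" and v: "vld l i a j"
  shows "vld l (Suc i) a j'"
    "phi b l a (Suc i) j' = phi b l a i j + int (Aconst b l)
       + cst l (Suc i) (cfun l i - 1) (int (j'!(cfun l i - 1)) - int (a!(cfun l i - 1)))
       - cst l i (cfun l i - 1) (int (j!(cfun l i - 1)) - int (a!(cfun l i - 1)))"
proof -
  define c where "c = cfun l i - 1"
  have i2: "i < 2*l" and agr: "\<forall>k<l. k \<noteq> c \<longrightarrow> j!k = j'!k"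
    using H by (auto simp: Hadj_def c_def)
  have cl: "c < l" using cfun_lt[OF i2] c_def by simp
  show vs: "vld l (Suc i) a j'"
    unfolding vld_def
  proof (intro allI impI)
    fix k assume k: "k < l" "Suc i \<le> k"
    have "k \<noteq> c" using k cl c_def cfun_lo cfun_hi[of l i] i2 by (cases "i < l") auto
    then show "j'!k = a!k" using agr k v unfolding vld_def by auto
  qed
  define T where "T = (\<lambda>k. cst l i k (int (j!k) - int (a!k)))"
  define T' where "T' = (\<lambda>k. cst l (Suc i) k (int (j'!k) - int (a!k)))"
  have oth: "\<forall>k<l. k \<noteq> c \<longrightarrow> T k = T' k"
  proof (intro allI impI)
    fix k assume k: "k < l" "k \<noteq> c"
    have "(k + i < 2*l) = (k + Suc i < 2*l)"
      using k cl c_def cfun_lo cfun_hi[of l i] i2 by (cases "i < l") auto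
    then show "T k = T' k" using agr k by (simp add: T_def T'_def cst_def)
  qed
  have sw: "sum T' {..<l} = sum T {..<l} - T c + T' c" by (rule sum_swap1[OF cl oth])
  show "phi b l a (Suc i) j' = phi b l a i j + int (Aconst b l)
       + cst l (Suc i) (cfun l i - 1) (int (j'!(cfun l i - 1)) - int (a!(cfun l i - 1)))
       - cst l i (cfun l i - 1) (int (j!(cfun l i - 1)) - int (a!(cfun l i - 1)))"
    using sw phi_valid[OF v] phi_valid[OF vs] by (simp add: T_def T'_def c_def algebra_simps)
qed

definition rt :: "nat \<Rightarrow> nat list \<Rightarrow> nat list \<Rightarrow> nat \<Rightarrow> nat list" where
  "rt l a a' i = map (\<lambda>k. if 2*l \<le> k + i then a'!k else if k < i then (a!k + a'!k) div 2 else a!k) [0..<l]"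

lemma rt_nth: "k < l \<Longrightarrow> rt l a a' i ! k = (if 2*l \<le> k + i then a'!k else if k < i then (a!k + a'!k) div 2 else a!k)"
  by (simp add: rt_def)
lemma rt_len: "length (rt l a a' i) = l" by (simp add: rt_def)

lemma rt_valid: "validj b l a \<Longrightarrow> validj b l a' \<Longrightarrow> validj b l (rt l a a' i)"
  unfolding validj_def
proof (intro conjI ballI)
  assume va: "length a = l \<and> (\<forall>x\<in>set a. x < 2 ^ b)" and va': "length a' = l \<and> (\<forall>x\<in>set a'. x < 2 ^ b)"
  show "length (rt l a a' i) = l" by (rule rt_len)
  fix x assume "x \<in> set (rt l a a' i)"
  then obtain k where k: "k < l" "x = rt l a a' i ! k" by (auto simp: in_set_conv_nth rt_len)
  have "a!k < 2^b" "a'!k < 2^b" using va va' k by auto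
  then show "x < 2^b" using k rt_nth[OF k(1)] by auto
qed

lemma rt_0: "length a = l \<Longrightarrow> rt l a a' 0 = a"
  by (rule nth_equalityI) (auto simp: rt_len rt_nth)
lemma rt_2l: "length a' = l \<Longrightarrow> rt l a a' (2*l) = a'"
  by (rule nth_equalityI) (auto simp: rt_len rt_nth)

lemma rt_vld: "vld l i a (rt l a a' i)"
  by (auto simp: vld_def rt_nth)

lemma rt_Hadj:
  assumes "validj b l a" "validj b l a'" "i < 2*l"
  shows "Hadj b l i (rt l a a' i) (rt l a a' (Suc i))"
  unfolding Hadj_def
proof (intro conjI allI impI)
  show "i < 2*l" by fact
  show "validj b l (rt l a a' i)" "validj b l (rt l a a' (Suc i))" using rt_valid assms by auto
  fix k assume k: "k < l" "k \<noteq> cfun l i - 1"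
  have "k \<noteq> i \<or> \<not> i < l" using k cfun_lo by auto
  moreover have "k + Suc i \<noteq> 2*l" using k cfun_hi[of l i] assms(3) by (cases "l \<le> i") auto
  ultimately show "rt l a a' i ! k = rt l a a' (Suc i) ! k"
    using k by (auto simp: rt_nth)
qed

lemma mid_sq:
  fixes a a' :: nat
  assumes "even (a + a')"
  shows "hh (int a' - int a) = (int ((a + a') div 2) - int a)^2 + (int ((a + a') div 2) - int a')^2"
proof -
  define m where "m = (a + a') div 2"
  have m2: "2 * int m = int a + int a'" using assms unfolding m_def
    by (metis dvd_mult_div_cancel even_add of_nat_add of_nat_mult of_nat_numeral assms)
  have e: "even (int a' - int a)" using assms by (simp add: even_add)
  have "2 * hh (int a' - int a) = (int a' - int a)^2" by (rule hh_even[OF e])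
  moreover have "4 * ((int m - int a)^2 + (int m - int a')^2) = 2 * (int a' - int a)^2"
  proof -
    have "4 * ((int m - int a)^2 + (int m - int a')^2) = (2 * int m - 2 * int a)^2 + (2 * int m - 2* int a')^2"
      by (simp add: power2_eq_square algebra_simps)
    also have "\<dots> = 2 * (int a' - int a)^2" unfolding m2 by (simp add: power2_eq_square algebra_simps)
    finally show ?thesis .
  qed
  ultimately show ?thesis unfolding m_def[symmetric] by (smt (verit))
qed

lemma rt_tight:
  assumes va: "validj b l a" and va': "validj b l a'" and i2: "i < 2*l"
    and ev: "\<forall>k<l. even (a!k + a'!k)"
  shows "phi b l a (Suc i) (rt l a a' (Suc i)) = phi b l a i (rt l a a' i) + int (Hweight b l i (rt l a a' i) (rt l a a' (Suc i)))"
proof -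
  define c where "c = cfun l i - 1"
  define m where "m = (a!c + a'!c) div 2"
  have cl: "c < l" using cfun_lt[OF i2] c_def by simp
  have H: "Hadj b l i (rt l a a' i) (rt l a a' (Suc i))" by (rule rt_Hadj[OF va va' i2])
  note st = phi_step(2)[OF H rt_vld, folded c_def]
  note w = Hweight_int[of b l i "rt l a a' i" "rt l a a' (Suc i)", folded c_def]
  show ?thesis
  proof (cases "i < l")
    case True
    have ci: "c = i" using cfun_lo[OF True] c_def by simp
    have "rt l a a' i ! c = a!c" "rt l a a' (Suc i) ! c = m"
      using cl ci True by (auto simp: rt_nth m_def)
    then show ?thesis using st w ci True by (simp add: cst_def power2_commute)
  next
    case False
    have ci: "c = 2*l - i - 1" using cfun_hi[of l i] False i2 c_def by simp
    have r1: "rt l a a' i ! c = m" "rt l a a' (Suc i) ! c = a'!c"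
      using cl ci False i2 by (auto simp: rt_nth m_def)
    have "hh (int (a'!c) - int (a!c)) = (int m - int (a!c))^2 + (int m - int (a'!c))^2"
      unfolding m_def by (rule mid_sq) (use ev cl in auto)
    then show ?thesis using st w ci False i2 r1 by (simp add: cst_def power2_commute)
  qed
qed

lemma phi_0: "length a = l \<Longrightarrow> phi b l a 0 a = 0"
  by (simp add: phi_def vld_def cst_def hh_def)

lemma phi_2l: "phi b l a (2*l) a' = Dv b l a a'"
  by (simp add: phi_def vld_def cst_def Dv_def)


lemma rp_trans: "(x,y) \<in> R^^m \<Longrightarrow> (y,z) \<in> R^^n \<Longrightarrow> (x,z) \<in> R^^(m+n)"
  by (auto simp: relpow_add)

lemma GE_sym: "(x,y) \<in> GE b l \<sigma> \<Longrightarrow> (y,x) \<in> GE b l \<sigma>"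
  by (auto simp: GE_def)

lemma GE_pow_sym: "(x,y) \<in> (GE b l \<sigma>)^^n \<Longrightarrow> (y,x) \<in> (GE b l \<sigma>)^^n"
proof (induction n arbitrary: y)
  case 0 then show ?case by simp
next
  case (Suc n)
  then obtain z where "(x,z) \<in> (GE b l \<sigma>)^^n" "(z,y) \<in> GE b l \<sigma>" by auto
  then show ?case using Suc.IH GE_sym relpow_Suc_I2 by metis
qed

lemma GE_rt_sym: "(x,y) \<in> (GE b l \<sigma>)\<^sup>* \<Longrightarrow> (y,x) \<in> (GE b l \<sigma>)\<^sup>*"
  using GE_pow_sym by (metis rtrancl_power)

lemma GB_GE: "p \<in> GB b l \<sigma> \<Longrightarrow> p \<in> GE b l \<sigma>" by (simp add: GE_def)

lemma tout_path:
  assumes "i < 2*l" "validj b l j"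
  shows "D \<le> b \<Longrightarrow> p < 2^D \<Longrightarrow> (TOut i j 0 0, TOut i j D p) \<in> (GE b l \<sigma>)^^D"
proof (induction D arbitrary: p)
  case 0 then show ?case by simp
next
  case (Suc D)
  define q where "q = p div 2"
  have q: "q < 2^D" using Suc.prems by (auto simp: q_def)
  have "(TOut i j 0 0, TOut i j D q) \<in> (GE b l \<sigma>)^^D" using Suc q by simp
  moreover have "(TOut i j D q, TOut i j (Suc D) p) \<in> GE b l \<sigma>"
    by (rule GB_GE) (use assms Suc.prems q in \<open>auto simp: GB_def q_def\<close>)
  ultimately show ?case by (rule relpow_Suc_I)
qed

lemma tin_path:
  assumes "0 < i" "i \<le> 2*l" "validj b l j"
  shows "D \<le> b \<Longrightarrow> p < 2^D \<Longrightarrow> (TIn i j 0 0, TIn i j D p) \<in> (GE b l \<sigma>)^^D"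
proof (induction D arbitrary: p)
  case 0 then show ?case by simp
next
  case (Suc D)
  define q where "q = p div 2"
  have q: "q < 2^D" using Suc.prems by (auto simp: q_def)
  have "(TIn i j 0 0, TIn i j D q) \<in> (GE b l \<sigma>)^^D" using Suc q by simp
  moreover have "(TIn i j D q, TIn i j (Suc D) p) \<in> GE b l \<sigma>"
    by (rule GB_GE) (use assms Suc.prems q in \<open>auto simp: GB_def q_def\<close>)
  ultimately show ?case by (rule relpow_Suc_I)
qed

lemma pnode_GB: "Hadj b l i j j' \<Longrightarrow> t < plen b l i j j' \<Longrightarrow>
   (pnode b l \<sigma> i j j' t, pnode b l \<sigma> i j j' (Suc t)) \<in> GB b l \<sigma>"
  unfolding GB_def
  apply (rule UnI2)
  apply (simp only: mem_Collect_eq)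
  apply (rule exI[of _ i], rule exI[of _ j], rule exI[of _ j'], rule exI[of _ t])
  apply simp
  done

lemma pnode_path:
  assumes "Hadj b l i j j'"
  shows "t \<le> plen b l i j j' \<Longrightarrow> (pnode b l \<sigma> i j j' 0, pnode b l \<sigma> i j j' t) \<in> (GE b l \<sigma>)^^t"
proof (induction t)
  case 0 then show ?case by simp
next
  case (Suc t)
  have "(pnode b l \<sigma> i j j' t, pnode b l \<sigma> i j j' (Suc t)) \<in> GE b l \<sigma>"
    by (rule GB_GE, rule pnode_GB) (use assms Suc.prems in auto)
  then show ?case using Suc by (auto intro: relpow_Suc_I)
qed

lemma Hadj_valid: "Hadj b l i j j' \<Longrightarrow> i < 2*l \<and> validj b l j \<and> validj b l j'"
  by (simp add: Hadj_def)

lemma A_big: "1 \<le> b \<Longrightarrow> 1 \<le> l \<Longrightarrow> 4 * b + 4 \<le> Aconst b l"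
proof -
  assume b1: "1 \<le> b" and l1: "1 \<le> l"
  have "4 * int b + 4 \<le> 2 * (2^b)^2" by (rule K_le[OF b1])
  moreover have "3 * (2^b)^2 \<le> int (Aconst b l)" by (rule A_ge[OF l1])
  moreover have "(0::int) \<le> (2^b)^2" by simp
  ultimately have "int (4 * b + 4) \<le> int (Aconst b l)" by simp
  then show ?thesis by linarith
qed

lemma Hweight_ge: "Aconst b l \<le> Hweight b l i j j'"
proof -
  have "int (Aconst b l) \<le> int (Hweight b l i j j')" using Hweight_int[of b l i j j'] by simp
  then show ?thesis by simp
qed

lemma labD:
  assumes "valid_labeling b l \<sigma>" "validj b l j" "x < 2^b"
  shows "0 < i \<Longrightarrow> i \<le> 2*l \<Longrightarrow> \<sigma> True i j x < 2^b"
    and "i < 2*l \<Longrightarrow> \<sigma> False i j x < 2^b"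
proof -
  show "0 < i \<Longrightarrow> i \<le> 2*l \<Longrightarrow> \<sigma> True i j x < 2^b"
    using assms unfolding valid_labeling_def by (meson bij_betwE lessThan_iff)
  show "i < 2*l \<Longrightarrow> \<sigma> False i j x < 2^b"
    using assms unfolding valid_labeling_def by (meson bij_betwE lessThan_iff)
qed

lemma gadget_path:
  assumes H: "Hadj b l i j j'" and lab: "valid_labeling b l \<sigma>" and b1: "1 \<le> b"
  shows "(HV i j, HV (Suc i) j') \<in> (GE b l \<sigma>)^^(Hweight b l i j j')"
proof -
  define c where "c = cfun l i - 1"
  have i2: "i < 2*l" and vj: "validj b l j" and vj': "validj b l j'" using H by (auto simp: Hadj_def)
  have l1: "1 \<le> l" using i2 by simp
  have cl: "c < l" using cfun_lt[OF i2] c_def by simp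
  define p0 where "p0 = \<sigma> False i j (j'!c)"
  define q0 where "q0 = \<sigma> True (Suc i) j' (j!c)"
  have p0: "p0 < 2^b" unfolding p0_def by (rule labD(2)[OF lab vj validjD[OF vj' cl] i2])
  have q0: "q0 < 2^b" unfolding q0_def by (rule labD(1)[OF lab vj' validjD[OF vj cl]]) (use i2 in auto)
  have w: "Hweight b l i j j' \<ge> 4*b+4" using Hweight_ge[of b l i j j'] A_big[OF b1 l1] by simp
  define L where "L = plen b l i j j'"
  have L: "L = Hweight b l i j j' - 2*b - 2" "L \<noteq> 0" using w by (auto simp: L_def plen_def)
  have e1: "(HV i j, TOut i j 0 0) \<in> (GE b l \<sigma>)^^1"
    using i2 vj by (auto simp: GE_def GB_def)
  have e2: "(TOut i j 0 0, TOut i j b p0) \<in> (GE b l \<sigma>)^^b" by (rule tout_path[OF i2 vj]) (use p0 in auto)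
  have e3: "(pnode b l \<sigma> i j j' 0, pnode b l \<sigma> i j j' L) \<in> (GE b l \<sigma>)^^L"
    by (rule pnode_path[OF H]) (simp add: L_def)
  have pn0: "pnode b l \<sigma> i j j' 0 = TOut i j b p0" by (simp add: pnode_def p0_def c_def)
  have pnL: "pnode b l \<sigma> i j j' L = TIn (Suc i) j' b q0" using L by (simp add: pnode_def q0_def c_def L_def)
  have e4: "(TIn (Suc i) j' b q0, TIn (Suc i) j' 0 0) \<in> (GE b l \<sigma>)^^b"
    by (rule GE_pow_sym, rule tin_path) (use i2 vj' q0 in auto)
  have e5: "(TIn (Suc i) j' 0 0, HV (Suc i) j') \<in> (GE b l \<sigma>)^^1"
    using i2 vj' by (auto simp: GE_def GB_def)
  have "(HV i j, HV (Suc i) j') \<in> (GE b l \<sigma>)^^(1 + b + L + b + 1)"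
    using rp_trans[OF rp_trans[OF rp_trans[OF rp_trans[OF e1 e2] e3[unfolded pn0 pnL]] e4] e5] .
  moreover have "1 + b + L + b + 1 = Hweight b l i j j'" using L w by simp
  ultimately show ?thesis by metis
qed

lemma route_path:
  assumes va: "validj b l a" and va': "validj b l a'" and ev: "\<forall>k<l. even (a!k + a'!k)"
    and lab: "valid_labeling b l \<sigma>" and b1: "1 \<le> b"
  shows "i \<le> 2*l \<Longrightarrow> (HV 0 a, HV i (rt l a a' i)) \<in> (GE b l \<sigma>)^^(nat (phi b l a i (rt l a a' i)))"
proof (induction i)
  case 0
  have "length a = l" using va validj_len by auto
  then show ?case by (simp add: rt_0 phi_0)
next
  case (Suc i)
  then have i2: "i < 2*l" by simp
  have "(HV i (rt l a a' i), HV (Suc i) (rt l a a' (Suc i))) \<in> (GE b l \<sigma>)^^(Hweight b l i (rt l a a' i) (rt l a a' (Suc i)))"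
    by (rule gadget_path[OF rt_Hadj[OF va va' i2] lab b1])
  moreover have "0 \<le> phi b l a i (rt l a a' i)"
    using phi_ge[OF va rt_valid[OF va va'] b1, of i] by (smt (verit) of_nat_0_le_iff zero_le_mult_iff)
  ultimately show ?case using Suc rt_tight[OF va va' i2 ev] rp_trans
    by (metis nat_int nat_add_distrib of_nat_0_le_iff Suc_leD)
qed

lemma Hadj_refl: "validj b l y \<Longrightarrow> i < 2*l \<Longrightarrow> Hadj b l i y y"
  by (simp add: Hadj_def)

lemma pow_rt: "(x,y) \<in> R^^n \<Longrightarrow> (x,y) \<in> R\<^sup>*"
  using relpow_imp_rtrancl by blast

lemma up_path:
  assumes "validj b l y" "valid_labeling b l \<sigma>" "1 \<le> b"
  shows "i \<le> 2*l \<Longrightarrow> (HV 0 y, HV i y) \<in> (GE b l \<sigma>)\<^sup>*"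
proof (induction i)
  case 0 then show ?case by simp
next
  case (Suc i)
  then have "(HV i y, HV (Suc i) y) \<in> (GE b l \<sigma>)\<^sup>*"
    using gadget_path[OF Hadj_refl[OF assms(1)] assms(2,3)] pow_rt by (metis Suc_le_eq)
  then show ?case using Suc by (meson Suc_leD rtrancl_trans)
qed

definition zp :: "nat \<Rightarrow> nat list \<Rightarrow> nat list \<Rightarrow> nat \<Rightarrow> nat list" where
  "zp l a y t = map (\<lambda>k. if k < t then y!k else a!k) [0..<l]"

lemma zp_path:
  assumes va: "validj b l a" and vy: "validj b l y" and lab: "valid_labeling b l \<sigma>" and b1: "1 \<le> b"
  shows "t \<le> l \<Longrightarrow> (HV 0 a, HV t (zp l a y t)) \<in> (GE b l \<sigma>)\<^sup>*"
proof (induction t)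
  case 0
  have "zp l a y 0 = a" using va by (intro nth_equalityI) (auto simp: zp_def validj_def)
  then show ?case by simp
next
  case (Suc t)
  have vz: "validj b l (zp l a y t')" for t'
    using va vy unfolding validj_def zp_def by (auto simp: in_set_conv_nth) (metis nth_mem)+
  have "Hadj b l t (zp l a y t) (zp l a y (Suc t))"
    unfolding Hadj_def using Suc.prems vz by (auto simp: zp_def cfun_def)
  then have "(HV t (zp l a y t), HV (Suc t) (zp l a y (Suc t))) \<in> (GE b l \<sigma>)\<^sup>*"
    using gadget_path[OF _ lab b1] pow_rt by metis
  then show ?case using Suc by (meson Suc_leD rtrancl_trans)
qed

lemma reach_HV:
  assumes va: "validj b l a" and vy: "validj b l y" and lab: "valid_labeling b l \<sigma>" and b1: "1 \<le> b"
    and i2: "i \<le> 2*l"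
  shows "(HV 0 a, HV i y) \<in> (GE b l \<sigma>)\<^sup>*"
proof -
  have "zp l a y l = y" using vy by (intro nth_equalityI) (auto simp: zp_def validj_def)
  then have 1: "(HV 0 a, HV l y) \<in> (GE b l \<sigma>)\<^sup>*" using zp_path[OF va vy lab b1, of l] by simp
  have "(HV 0 y, HV l y) \<in> (GE b l \<sigma>)\<^sup>*" using up_path[OF vy lab b1, of l] by simp
  then have 2: "(HV l y, HV 0 y) \<in> (GE b l \<sigma>)\<^sup>*" by (rule GE_rt_sym)
  have 3: "(HV 0 y, HV i y) \<in> (GE b l \<sigma>)\<^sup>*" by (rule up_path[OF vy lab b1 i2])
  show ?thesis using 1 2 3 by (meson rtrancl_trans)
qed

lemma reach_GV:
  assumes va: "validj b l a" and lab: "valid_labeling b l \<sigma>" and b1: "1 \<le> b" and w: "w \<in> GV b l"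
  shows "(HV 0 a, w) \<in> (GE b l \<sigma>)\<^sup>*"
proof -
  consider (hv) i j where "w = HV i j" "i \<le> 2*l" "validj b l j"
    | (tin) i j d p where "w = TIn i j d p" "0 < i" "i \<le> 2*l" "validj b l j" "d \<le> b" "p < 2^d"
    | (tout) i j d p where "w = TOut i j d p" "i < 2*l" "validj b l j" "d \<le> b" "p < 2^d"
    | (aux) i j j' t where "w = Aux i j j' t" "Hadj b l i j j'" "0 < t" "t < plen b l i j j'"
    using w unfolding GV_def by blast
  then show ?thesis
  proof cases
    case hv then show ?thesis using reach_HV[OF va _ lab b1] by simp
  next
    case tin
    have "(HV 0 a, HV i j) \<in> (GE b l \<sigma>)\<^sup>*" using reach_HV[OF va _ lab b1] tin by simp
    moreover have "(HV i j, TIn i j 0 0) \<in> GE b l \<sigma>" using tin by (auto simp: GE_def GB_def)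
    moreover have "(TIn i j 0 0, TIn i j d p) \<in> (GE b l \<sigma>)\<^sup>*"
      using tin_path[of i l b j d p \<sigma>] tin pow_rt by metis
    ultimately show ?thesis using tin by (meson rtrancl_into_rtrancl rtrancl_trans)
  next
    case tout
    have "(HV 0 a, HV i j) \<in> (GE b l \<sigma>)\<^sup>*" using reach_HV[OF va _ lab b1] tout by simp
    moreover have "(HV i j, TOut i j 0 0) \<in> GE b l \<sigma>" using tout by (auto simp: GE_def GB_def)
    moreover have "(TOut i j 0 0, TOut i j d p) \<in> (GE b l \<sigma>)\<^sup>*"
      using tout_path[of i l b j d p \<sigma>] tout pow_rt by metis
    ultimately show ?thesis using tout by (meson rtrancl_into_rtrancl rtrancl_trans)
  next
    case aux
    define c where "c = cfun l i - 1"
    have i2: "i < 2*l" and vj: "validj b l j" and vj': "validj b l j'" using aux Hadj_valid by auto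
    have cl: "c < l" using cfun_lt[OF i2] c_def by simp
    define p0 where "p0 = \<sigma> False i j (j'!c)"
    have p0: "p0 < 2^b" unfolding p0_def by (rule labD(2)[OF lab vj validjD[OF vj' cl] i2])
    have "(HV 0 a, HV i j) \<in> (GE b l \<sigma>)\<^sup>*" using reach_HV[OF va vj lab b1] i2 by simp
    moreover have "(HV i j, TOut i j 0 0) \<in> GE b l \<sigma>" using i2 vj by (auto simp: GE_def GB_def)
    moreover have "(TOut i j 0 0, TOut i j b p0) \<in> (GE b l \<sigma>)\<^sup>*"
      using tout_path[OF i2 vj, of b p0 \<sigma>] p0 pow_rt by simp
    moreover have "pnode b l \<sigma> i j j' 0 = TOut i j b p0" by (simp add: pnode_def p0_def c_def)
    moreover have "(pnode b l \<sigma> i j j' 0, pnode b l \<sigma> i j j' t) \<in> (GE b l \<sigma>)\<^sup>*"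
      using pnode_path[OF aux(2), of t \<sigma>] aux pow_rt by simp
    moreover have "pnode b l \<sigma> i j j' t = w" using aux by (simp add: pnode_def)
    ultimately show ?thesis by (metis rtrancl_into_rtrancl rtrancl_trans)
  qed
qed


definition Gp :: "int \<Rightarrow> (nat \<Rightarrow> nat list \<Rightarrow> int) \<Rightarrow> nat \<Rightarrow> nat \<Rightarrow> gvert \<Rightarrow> int" where
  "Gp e g b l w = (case w of HV i j \<Rightarrow> g i j
     | TIn i j d p \<Rightarrow> g i j - e * (int d + 1)
     | TOut i j d p \<Rightarrow> g i j + e * (int d + 1)
     | Aux i j j' t \<Rightarrow> min (g i j + e * (int b + 1) + int t)
          (g (Suc i) j' - e * (int b + 1) + (int (plen b l i j j') - int t)))"

lemma Gp_pnode:
  assumes Hc: "\<bar>g (Suc i) j' - g i j - 2*e*(int b+1)\<bar> \<le> int (plen b l i j j')"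
    and t: "t \<le> plen b l i j j'"
  shows "Gp e g b l (pnode b l \<sigma> i j j' t) = min (g i j + e * (int b + 1) + int t)
          (g (Suc i) j' - e * (int b + 1) + (int (plen b l i j j') - int t))"
proof (cases "t = 0")
  case True
  then show ?thesis using Hc by (simp add: pnode_def Gp_def)
next
  case False
  show ?thesis
  proof (cases "t = plen b l i j j'")
    case True
    then show ?thesis using Hc False by (simp add: pnode_def Gp_def)
  next
    case False2: False
    then show ?thesis using False by (simp add: pnode_def Gp_def)
  qed
qed

lemma Gp_lip:
  assumes e: "e = 1 \<or> e = -1"
    and Hc: "\<And>i j j'. Hadj b l i j j' \<Longrightarrow> \<bar>g (Suc i) j' - g i j - 2*e*(int b+1)\<bar> \<le> int (plen b l i j j')"
    and xy: "(x,y) \<in> GB b l \<sigma>"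
  shows "\<bar>Gp e g b l x - Gp e g b l y\<bar> \<le> 1"
proof -
  have ae: "\<bar>e\<bar> = 1" using e by auto
  have tree: ?thesis if "x = TIn i j d p" "y = TIn i j (Suc d) q" for i j d p q
    using that ae by (simp add: Gp_def algebra_simps)
  have tree2: ?thesis if "x = TOut i j d p" "y = TOut i j (Suc d) q" for i j d p q
    using that ae by (simp add: Gp_def algebra_simps)
  have root1: ?thesis if "x = HV i j" "y = TIn i j 0 0" for i j
    using that ae by (simp add: Gp_def)
  have root2: ?thesis if "x = HV i j" "y = TOut i j 0 0" for i j
    using that ae by (simp add: Gp_def)
  have pn: ?thesis if "x = pnode b l \<sigma> i j j' t" "y = pnode b l \<sigma> i j j' (Suc t)"
      "Hadj b l i j j'" "t < plen b l i j j'" for i j j' t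
  proof -
    have h: "\<bar>g (Suc i) j' - g i j - 2*e*(int b+1)\<bar> \<le> int (plen b l i j j')" using Hc that(3) .
    show ?thesis using that Gp_pnode[OF h, of t \<sigma>] Gp_pnode[OF h, of "Suc t" \<sigma>] by auto
  qed
  show ?thesis using xy unfolding GB_def
    using tree tree2 root1 root2 pn by blast
qed

lemma Gp_path:
  assumes lip: "\<And>x y. (x,y) \<in> GB b l \<sigma> \<Longrightarrow> \<bar>f x - f y\<bar> \<le> (1::int)"
  shows "(x,y) \<in> (GE b l \<sigma>)^^n \<Longrightarrow> \<bar>f x - f y\<bar> \<le> int n"
proof (induction n arbitrary: y)
  case 0 then show ?case by simp
next
  case (Suc n)
  then obtain z where z: "(x,z) \<in> (GE b l \<sigma>)^^n" "(z,y) \<in> GE b l \<sigma>" by auto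
  have "\<bar>f z - f y\<bar> \<le> 1" using z(2) lip unfolding GE_def by (metis UnE abs_minus_commute converseD prod.exhaust_sel)
  then show ?case using Suc.IH[OF z(1)] by simp
qed

lemma Hadj_refl_edge:
  assumes "Hadj b l i j j'"
  shows "Hadj b l (2*l - Suc i) j' j" "Hweight b l (2*l - Suc i) j' j = Hweight b l i j j'"
    "plen b l (2*l - Suc i) j' j = plen b l i j j'"
proof -
  have i2: "i < 2*l" using assms by (simp add: Hadj_def)
  have c: "cfun l (2*l - Suc i) - 1 = cfun l i - 1" using i2 by (auto simp: cfun_def)
  show "Hadj b l (2*l - Suc i) j' j" using assms c i2 by (auto simp: Hadj_def)
  show "Hweight b l (2*l - Suc i) j' j = Hweight b l i j j'" using c by (simp add: Hweight_def power2_commute)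
  then show "plen b l (2*l - Suc i) j' j = plen b l i j j'" by (simp add: plen_def)
qed

lemma plen_int: "1 \<le> b \<Longrightarrow> 1 \<le> l \<Longrightarrow> int (plen b l i j j') = int (Hweight b l i j j') - 2 * int b - 2"
  using Hweight_ge[of b l i j j'] A_big[of b l] by (simp add: plen_def)

definition psi :: "nat \<Rightarrow> nat \<Rightarrow> nat list \<Rightarrow> nat \<Rightarrow> nat list \<Rightarrow> int" where
  "psi b l a' i y = phi b l a' (2*l - i) y"

lemma Hc_phi:
  assumes "Hadj b l i j j'" "validj b l a" "1 \<le> b"
  shows "\<bar>phi b l a (Suc i) j' - phi b l a i j - 2*1*(int b+1)\<bar> \<le> int (plen b l i j j')"
proof -
  have l1: "1 \<le> l" using assms(1) by (simp add: Hadj_def)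
  show ?thesis using phi_lip[OF assms] plen_int[OF assms(3) l1, of i j j'] by simp
qed

lemma Hc_psi:
  assumes H: "Hadj b l i j j'" and va: "validj b l a'" and b1: "1 \<le> b"
  shows "\<bar>psi b l a' (Suc i) j' - psi b l a' i j - 2*(-1)*(int b+1)\<bar> \<le> int (plen b l i j j')"
    "psi b l a' i j - psi b l a' (Suc i) j' \<le> int (Hweight b l i j j')"
    "psi b l a' (Suc i) j' - psi b l a' i j \<le> int (Hweight b l i j j') - (4 * int b + 4)"
proof -
  have i2: "i < 2*l" using H by (simp add: Hadj_def)
  have l1: "1 \<le> l" using i2 by simp
  note R = Hadj_refl_edge[OF H]
  have e: "Suc (2*l - Suc i) = 2*l - i" using i2 by simp
  note pl = phi_lip[OF R(1) va b1, unfolded e R(2)]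
  have p1: "psi b l a' i j = phi b l a' (2*l - i) j" by (simp add: psi_def)
  have p2: "psi b l a' (Suc i) j' = phi b l a' (2*l - Suc i) j'" by (simp add: psi_def)
  show "psi b l a' i j - psi b l a' (Suc i) j' \<le> int (Hweight b l i j j')"
    "psi b l a' (Suc i) j' - psi b l a' i j \<le> int (Hweight b l i j j') - (4 * int b + 4)"
    using pl p1 p2 by auto
  then show "\<bar>psi b l a' (Suc i) j' - psi b l a' i j - 2*(-1)*(int b+1)\<bar> \<le> int (plen b l i j j')"
    using plen_int[OF b1 l1, of i j j'] by simp
qed

fun own :: "gvert \<Rightarrow> nat \<times> nat list" where
  "own (HV i j) = (i, j)"
| "own (TIn i j d p) = (i, j)"
| "own (TOut i j d p) = (i, j)"
| "own (Aux i j j' t) = (i, j)"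

lemma own_GV: "w \<in> GV b l \<Longrightarrow> fst (own w) \<le> 2*l \<and> validj b l (snd (own w))"
  unfolding GV_def by (auto simp: Hadj_def)

lemma FP_sum:
  assumes va: "validj b l a" and va': "validj b l a'" and b1: "1 \<le> b" and w: "w \<in> GV b l"
    and le: "Gp 1 (phi b l a) b l w + Gp (-1) (psi b l a') b l w \<le> Dv b l a a'"
  shows "phi b l a (fst (own w)) (snd (own w)) + psi b l a' (fst (own w)) (snd (own w)) \<le> Dv b l a a'"
proof -
  consider (hv) i j where "w = HV i j" | (tin) i j d p where "w = TIn i j d p"
    | (tout) i j d p where "w = TOut i j d p"
    | (aux) i j j' t where "w = Aux i j j' t" "Hadj b l i j j'" "0 < t" "t < plen b l i j j'"
    using w unfolding GV_def by blast
  then show ?thesis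
  proof cases
    case hv then show ?thesis using le by (simp add: Gp_def)
  next
    case tin then show ?thesis using le by (simp add: Gp_def)
  next
    case tout then show ?thesis using le by (simp add: Gp_def)
  next
    case aux
    have i2: "i < 2*l" and vj: "validj b l j" and vj': "validj b l j'" using aux Hadj_valid by auto
    have l1: "1 \<le> l" using i2 by simp
    define L where "L = int (plen b l i j j')"
    have Lw: "L = int (Hweight b l i j j') - 2 * int b - 2" using plen_int[OF b1 l1] L_def by simp
    have s1: "Dv b l a a' \<le> phi b l a i j + psi b l a' i j"
      using phi_sum(1)[OF va va' vj, of i] i2 b1 by (simp add: psi_def)
    have s2: "Dv b l a a' \<le> phi b l a (Suc i) j' + psi b l a' (Suc i) j'"
      using phi_sum(1)[OF va va' vj', of "Suc i"] i2 b1 by (simp add: psi_def)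
    have e1: "phi b l a i j - phi b l a (Suc i) j' \<le> int (Hweight b l i j j') - (4 * int b + 4)"
      using phi_lip(2)[OF aux(2) va b1] .
    have e2: "psi b l a' i j - psi b l a' (Suc i) j' \<le> int (Hweight b l i j j')"
      using Hc_psi(2)[OF aux(2) va' b1] .
    have t: "0 < int t" "int t < L" using aux L_def by auto
    have F: "Gp 1 (phi b l a) b l w = min (phi b l a i j + (int b + 1) + int t) (phi b l a (Suc i) j' - (int b + 1) + (L - int t))"
      using aux by (simp add: Gp_def L_def)
    have P: "Gp (-1) (psi b l a') b l w = min (psi b l a' i j - (int b + 1) + int t) (psi b l a' (Suc i) j' + (int b + 1) + (L - int t))"
      using aux by (simp add: Gp_def L_def)
    have "phi b l a i j + psi b l a' i j \<le> Dv b l a a'"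
      using le F P s1 s2 e1 e2 t Lw by (simp add: min_def split: if_splits; linarith)
    then show ?thesis using aux by simp
  qed
qed


lemma gdist_pow: "(u,w) \<in> E\<^sup>* \<Longrightarrow> (u,w) \<in> E^^(gdist E u w)"
  unfolding gdist_def by (rule LeastI_ex) (simp add: rtrancl_power)

lemma gdist_le: "(u,w) \<in> E^^n \<Longrightarrow> gdist E u w \<le> n"
  unfolding gdist_def by (rule Least_le)

lemma hubkey:
  assumes va: "validj b l a" and va': "validj b l a'" and ev: "\<forall>k<l. even (a!k + a'!k)"
    and lab: "valid_labeling b l \<sigma>" and b1: "1 \<le> b" and l1: "1 \<le> l"
    and w: "w \<in> GV b l"
    and eq: "gdist (GE b l \<sigma>) (HV 0 a) w + gdist (GE b l \<sigma>) w (HV (2*l) a') = gdist (GE b l \<sigma>) (HV 0 a) (HV (2*l) a')"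
  shows "Rt l a a' (fst (own w)) (snd (own w))"
proof -
  define E where "E = GE b l \<sigma>"
  define u where "u = HV 0 a"
  define v where "v = HV (2*l) a'"
  have vGV: "v \<in> GV b l" using va' unfolding v_def GV_def by auto
  have uw: "(u,w) \<in> E\<^sup>*" using reach_GV[OF va lab b1 w] by (simp add: u_def E_def)
  have uv: "(u,v) \<in> E\<^sup>*" using reach_GV[OF va lab b1 vGV] by (simp add: u_def E_def)
  have wv: "(w,v) \<in> E\<^sup>*" using GE_rt_sym uw uv unfolding E_def by (meson rtrancl_trans)
  define F where "F = Gp 1 (phi b l a) b l"
  define P where "P = Gp (-1) (psi b l a') b l"
  have Flip: "\<And>x y. (x,y) \<in> GB b l \<sigma> \<Longrightarrow> \<bar>F x - F y\<bar> \<le> 1"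
    unfolding F_def by (rule Gp_lip) (use Hc_phi[OF _ va b1] in auto)
  have Plip: "\<And>x y. (x,y) \<in> GB b l \<sigma> \<Longrightarrow> \<bar>P x - P y\<bar> \<le> 1"
    unfolding P_def by (rule Gp_lip) (use Hc_psi(1)[OF _ va' b1] in auto)
  have Fu: "F u = 0" using va by (simp add: F_def u_def Gp_def phi_0 validj_len)
  have Pv: "P v = 0" using va' by (simp add: P_def v_def Gp_def psi_def phi_0 validj_len)
  have d1: "\<bar>F u - F w\<bar> \<le> int (gdist E u w)"
    using Gp_path[OF Flip gdist_pow[OF uw, unfolded E_def]] by (simp add: E_def)
  have d2: "\<bar>P w - P v\<bar> \<le> int (gdist E w v)"
    using Gp_path[OF Plip gdist_pow[OF wv, unfolded E_def]] by (simp add: E_def)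
  have "rt l a a' (2*l) = a'" using va' validj_len rt_2l by blast
  then have "(u,v) \<in> E^^(nat (Dv b l a a'))"
    using route_path[OF va va' ev lab b1, of "2*l"] phi_2l[of b l a a'] by (simp add: u_def v_def E_def)
  then have d3: "gdist E u v \<le> nat (Dv b l a a')" by (rule gdist_le)
  have Dv0: "0 \<le> Dv b l a a'" using phi_ge[OF va va' b1, of "2*l"] phi_2l[of b l a a']
    by (smt (verit) of_nat_0_le_iff zero_le_mult_iff)
  have "F w + P w \<le> Dv b l a a'"
    using d1 d2 d3 Fu Pv eq Dv0 unfolding E_def u_def v_def by linarith
  then have "phi b l a (fst (own w)) (snd (own w)) + psi b l a' (fst (own w)) (snd (own w)) \<le> Dv b l a a'"
    using FP_sum[OF va va' b1 w] by (simp add: F_def P_def)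
  then show ?thesis
    using phi_sum(2)[OF va va' _ _ b1, of "snd (own w)" "fst (own w)"] own_GV[OF w] ev
    by (simp add: psi_def)
qed


lemma pn_HV[simp]: "pnode b l \<sigma> i j j' t \<noteq> HV i2 j2" "HV i2 j2 \<noteq> pnode b l \<sigma> i j j' t"
  by (auto simp: pnode_def)

lemma pn_TOut: "pnode b l \<sigma> i j j' t = TOut i2 j2 d p \<Longrightarrow>
   t = 0 \<and> i2 = i \<and> j2 = j \<and> d = b \<and> p = \<sigma> False i j (j'!(cfun l i - 1))"
  by (auto simp: pnode_def split: if_splits)

lemma pn_TIn: "pnode b l \<sigma> i j j' t = TIn i2 j2 d p \<Longrightarrow>
   t \<noteq> 0 \<and> t = plen b l i j j' \<and> i2 = Suc i \<and> j2 = j' \<and> d = b \<and> p = \<sigma> True (Suc i) j' (j!(cfun l i - 1))"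
  by (auto simp: pnode_def split: if_splits)

lemma pn_Aux: "pnode b l \<sigma> i j j' t = Aux i2 j2 j2' t2 \<Longrightarrow>
   t \<noteq> 0 \<and> t \<noteq> plen b l i j j' \<and> i2 = i \<and> j2 = j \<and> j2' = j' \<and> t2 = t"
  by (auto simp: pnode_def split: if_splits)

lemma nbr_def: "degree (GE b l \<sigma>) w = card {u. (w,u) \<in> GB b l \<sigma> \<or> (u,w) \<in> GB b l \<sigma>}"
  by (simp add: degree_def GE_def)

lemma deg_HV: "degree (GE b l \<sigma>) (HV i j) \<le> 3"
proof -
  have "{u. (HV i j,u) \<in> GB b l \<sigma> \<or> (u,HV i j) \<in> GB b l \<sigma>} \<subseteq> {TIn i j 0 0, TOut i j 0 0}"
    by (auto simp: GB_def)
  then have "card {u. (HV i j,u) \<in> GB b l \<sigma> \<or> (u,HV i j) \<in> GB b l \<sigma>} \<le> card {TIn i j 0 0, TOut i j 0 0}"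
    by (rule card_mono[rotated]) simp
  also have "\<dots> \<le> 3" by (rule order_trans[OF card_insert_le_m1]) auto
  finally show ?thesis by (simp add: nbr_def)
qed

lemma card3: "card {x, y, z} \<le> 3"
  by (metis card.empty card_insert_if finite.emptyI finite_insert le_SucI le_zero_eq numeral_3_eq_3 order_refl)

lemma deg_le3: "N \<subseteq> {x,y,z} \<Longrightarrow> card N \<le> 3"
  using card_mono[of "{x,y,z}" N] card3[of x y z] by auto

lemma deg_Aux: "degree (GE b l \<sigma>) (Aux i j j' t) \<le> 3"
proof -
  have "{u. (Aux i j j' t,u) \<in> GB b l \<sigma> \<or> (u,Aux i j j' t) \<in> GB b l \<sigma>}
     \<subseteq> {pnode b l \<sigma> i j j' (t - 1), pnode b l \<sigma> i j j' (Suc t), pnode b l \<sigma> i j j' (Suc t)}"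
  proof
    fix u assume "u \<in> {u. (Aux i j j' t,u) \<in> GB b l \<sigma> \<or> (u,Aux i j j' t) \<in> GB b l \<sigma>}"
    then have "(Aux i j j' t,u) \<in> GB b l \<sigma> \<or> (u,Aux i j j' t) \<in> GB b l \<sigma>" by simp
    then show "u \<in> {pnode b l \<sigma> i j j' (t - 1), pnode b l \<sigma> i j j' (Suc t), pnode b l \<sigma> i j j' (Suc t)}"
      unfolding GB_def
      by (auto dest!: pn_Aux[OF sym] pn_Aux)
  qed
  then have "card {u. (Aux i j j' t,u) \<in> GB b l \<sigma> \<or> (u,Aux i j j' t) \<in> GB b l \<sigma>} \<le> 3" by (rule deg_le3)
  then show ?thesis by (simp add: nbr_def)
qed

lemma lab_inj:
  assumes "valid_labeling b l \<sigma>" "validj b l j"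
  shows "0 < i \<Longrightarrow> i \<le> 2*l \<Longrightarrow> x < 2^b \<Longrightarrow> inv_into {..<2^b} (\<sigma> True i j) (\<sigma> True i j x) = x"
    and "i < 2*l \<Longrightarrow> x < 2^b \<Longrightarrow> inv_into {..<2^b} (\<sigma> False i j) (\<sigma> False i j x) = x"
  using assms unfolding valid_labeling_def bij_betw_def by (auto intro: inv_into_f_f)

lemma deg_TIn_int:
  assumes "d < b"
  shows "degree (GE b l \<sigma>) (TIn i j d p) \<le> 3"
proof -
  have "{u. (TIn i j d p,u) \<in> GB b l \<sigma> \<or> (u,TIn i j d p) \<in> GB b l \<sigma>}
     \<subseteq> {if d = 0 then HV i j else TIn i j (d - 1) (p div 2), TIn i j (Suc d) (2*p), TIn i j (Suc d) (2*p+1)}"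
  proof
    fix u assume "u \<in> {u. (TIn i j d p,u) \<in> GB b l \<sigma> \<or> (u,TIn i j d p) \<in> GB b l \<sigma>}"
    then have "(TIn i j d p,u) \<in> GB b l \<sigma> \<or> (u,TIn i j d p) \<in> GB b l \<sigma>" by simp
    then show "u \<in> {if d = 0 then HV i j else TIn i j (d - 1) (p div 2), TIn i j (Suc d) (2*p), TIn i j (Suc d) (2*p+1)}"
      unfolding GB_def using assms
      by (auto dest!: pn_TIn[OF sym] pn_TIn)
  qed
  then have "card {u. (TIn i j d p,u) \<in> GB b l \<sigma> \<or> (u,TIn i j d p) \<in> GB b l \<sigma>} \<le> 3" by (rule deg_le3)
  then show ?thesis by (simp add: nbr_def)
qed

lemma deg_TOut_int:
  assumes "d < b"
  shows "degree (GE b l \<sigma>) (TOut i j d p) \<le> 3"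
proof -
  have "{u. (TOut i j d p,u) \<in> GB b l \<sigma> \<or> (u,TOut i j d p) \<in> GB b l \<sigma>}
     \<subseteq> {if d = 0 then HV i j else TOut i j (d - 1) (p div 2), TOut i j (Suc d) (2*p), TOut i j (Suc d) (2*p+1)}"
  proof
    fix u assume "u \<in> {u. (TOut i j d p,u) \<in> GB b l \<sigma> \<or> (u,TOut i j d p) \<in> GB b l \<sigma>}"
    then have "(TOut i j d p,u) \<in> GB b l \<sigma> \<or> (u,TOut i j d p) \<in> GB b l \<sigma>" by simp
    then show "u \<in> {if d = 0 then HV i j else TOut i j (d - 1) (p div 2), TOut i j (Suc d) (2*p), TOut i j (Suc d) (2*p+1)}"
      unfolding GB_def using assms
      by (auto dest!: pn_TOut[OF sym] pn_TOut)
  qed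
  then have "card {u. (TOut i j d p,u) \<in> GB b l \<sigma> \<or> (u,TOut i j d p) \<in> GB b l \<sigma>} \<le> 3" by (rule deg_le3)
  then show ?thesis by (simp add: nbr_def)
qed

lemma uniq_in:
  assumes lab: "valid_labeling b l \<sigma>" and H: "Hadj b l i0 j0 j"
    and p: "\<sigma> True (Suc i0) j (j0!(cfun l i0 - 1)) = q"
  shows "j0 = j[cfun l i0 - 1 := inv_into {..<2^b} (\<sigma> True (Suc i0) j) q]"
proof -
  define c where "c = cfun l i0 - 1"
  have i2: "i0 < 2*l" and v0: "validj b l j0" and v: "validj b l j" and agr: "\<forall>k<l. k \<noteq> c \<longrightarrow> j0!k = j!k"
    using H by (auto simp: Hadj_def c_def)
  have cl: "c < l" using cfun_lt[OF i2] c_def by simp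
  have x: "j0!c < 2^b" using validjD[OF v0 cl] .
  have inv: "inv_into {..<2^b} (\<sigma> True (Suc i0) j) q = j0!c"
    using lab_inj(1)[OF lab v, of "Suc i0" "j0!c"] x i2 p c_def by simp
  show ?thesis unfolding c_def[symmetric] inv
    by (rule nth_equalityI) (use v0 v agr cl in \<open>auto simp: validj_def nth_list_update\<close>)
qed

lemma uniq_out:
  assumes lab: "valid_labeling b l \<sigma>" and H: "Hadj b l i j j1"
    and p: "\<sigma> False i j (j1!(cfun l i - 1)) = q"
  shows "j1 = j[cfun l i - 1 := inv_into {..<2^b} (\<sigma> False i j) q]"
proof -
  define c where "c = cfun l i - 1"
  have i2: "i < 2*l" and v1: "validj b l j1" and v: "validj b l j" and agr: "\<forall>k<l. k \<noteq> c \<longrightarrow> j!k = j1!k"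
    using H by (auto simp: Hadj_def c_def)
  have cl: "c < l" using cfun_lt[OF i2] c_def by simp
  have x: "j1!c < 2^b" using validjD[OF v1 cl] .
  have inv: "inv_into {..<2^b} (\<sigma> False i j) q = j1!c"
    using lab_inj(2)[OF lab v, of i "j1!c"] x i2 p c_def by simp
  show ?thesis unfolding c_def[symmetric] inv
    by (rule nth_equalityI) (use v1 v agr cl in \<open>auto simp: validj_def nth_list_update\<close>)
qed

lemma deg_TIn_leaf:
  assumes lab: "valid_labeling b l \<sigma>" and b1: "1 \<le> b"
  shows "degree (GE b l \<sigma>) (TIn i j b p) \<le> 3"
proof -
  define j0 where "j0 = j[cfun l (i - 1) - 1 := inv_into {..<2^b} (\<sigma> True i j) p]"
  define par where "par = TIn i j (b - 1) (p div 2)"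
  define X where "X = pnode b l \<sigma> (i - 1) j0 j (plen b l (i - 1) j0 j - 1)"
  have "{u. (TIn i j b p,u) \<in> GB b l \<sigma> \<or> (u,TIn i j b p) \<in> GB b l \<sigma>} \<subseteq> {par, X, X}"
  proof
    fix u assume "u \<in> {u. (TIn i j b p,u) \<in> GB b l \<sigma> \<or> (u,TIn i j b p) \<in> GB b l \<sigma>}"
    then have "(TIn i j b p,u) \<in> GB b l \<sigma> \<or> (u,TIn i j b p) \<in> GB b l \<sigma>" by simp
    then have "u = par \<or> (\<exists>i0 j0' t. u = pnode b l \<sigma> i0 j0' j t \<and> Hadj b l i0 j0' j \<and> Suc t = plen b l i0 j0' j
        \<and> i = Suc i0 \<and> p = \<sigma> True (Suc i0) j (j0'!(cfun l i0 - 1)))"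
      unfolding GB_def par_def using b1
      by (auto dest!: pn_TIn[OF sym] pn_TIn) blast+
    then show "u \<in> {par, X, X}"
    proof
      assume "\<exists>i0 j0' t. u = pnode b l \<sigma> i0 j0' j t \<and> Hadj b l i0 j0' j \<and> Suc t = plen b l i0 j0' j
        \<and> i = Suc i0 \<and> p = \<sigma> True (Suc i0) j (j0'!(cfun l i0 - 1))"
      then obtain i0 j0' t where h: "u = pnode b l \<sigma> i0 j0' j t" "Hadj b l i0 j0' j" "Suc t = plen b l i0 j0' j"
        "i = Suc i0" "p = \<sigma> True (Suc i0) j (j0'!(cfun l i0 - 1))" by blast
      have "j0' = j0" using uniq_in[OF lab h(2) h(5)[symmetric]] h(4) by (simp add: j0_def)
      moreover have "t = plen b l i0 j0' j - 1" using h(3) by simp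
      ultimately show ?thesis using h by (simp add: X_def)
    qed simp
  qed
  then have "card {u. (TIn i j b p,u) \<in> GB b l \<sigma> \<or> (u,TIn i j b p) \<in> GB b l \<sigma>} \<le> 3" by (rule deg_le3)
  then show ?thesis by (simp add: nbr_def)
qed

lemma deg_TOut_leaf:
  assumes lab: "valid_labeling b l \<sigma>" and b1: "1 \<le> b"
  shows "degree (GE b l \<sigma>) (TOut i j b p) \<le> 3"
proof -
  define j1 where "j1 = j[cfun l i - 1 := inv_into {..<2^b} (\<sigma> False i j) p]"
  define par where "par = TOut i j (b - 1) (p div 2)"
  define X where "X = pnode b l \<sigma> i j j1 (Suc 0)"
  have "{u. (TOut i j b p,u) \<in> GB b l \<sigma> \<or> (u,TOut i j b p) \<in> GB b l \<sigma>} \<subseteq> {par, X, X}"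
  proof
    fix u assume "u \<in> {u. (TOut i j b p,u) \<in> GB b l \<sigma> \<or> (u,TOut i j b p) \<in> GB b l \<sigma>}"
    then have "(TOut i j b p,u) \<in> GB b l \<sigma> \<or> (u,TOut i j b p) \<in> GB b l \<sigma>" by simp
    then have "u = par \<or> (\<exists>j1'. u = pnode b l \<sigma> i j j1' (Suc 0) \<and> Hadj b l i j j1'
        \<and> p = \<sigma> False i j (j1'!(cfun l i - 1)))"
      unfolding GB_def par_def using b1
      by (auto dest!: pn_TOut[OF sym] pn_TOut)
    then show "u \<in> {par, X, X}"
    proof
      assume "\<exists>j1'. u = pnode b l \<sigma> i j j1' (Suc 0) \<and> Hadj b l i j j1'
        \<and> p = \<sigma> False i j (j1'!(cfun l i - 1))"
      then obtain j1' where h: "u = pnode b l \<sigma> i j j1' (Suc 0)" "Hadj b l i j j1'"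
        "p = \<sigma> False i j (j1'!(cfun l i - 1))" by blast
      have "j1' = j1" using uniq_out[OF lab h(2) h(3)[symmetric]] by (simp add: j1_def)
      then show ?thesis using h by (simp add: X_def)
    qed simp
  qed
  then have "card {u. (TOut i j b p,u) \<in> GB b l \<sigma> \<or> (u,TOut i j b p) \<in> GB b l \<sigma>} \<le> 3" by (rule deg_le3)
  then show ?thesis by (simp add: nbr_def)
qed

lemma deg_all:
  assumes lab: "valid_labeling b l \<sigma>" and b1: "1 \<le> b" and w: "w \<in> GV b l"
  shows "degree (GE b l \<sigma>) w \<le> 3"
proof -
  consider (hv) i j where "w = HV i j"
    | (tin) i j d p where "w = TIn i j d p" "d \<le> b"
    | (tout) i j d p where "w = TOut i j d p" "d \<le> b"
    | (aux) i j j' t where "w = Aux i j j' t"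
    using w unfolding GV_def by blast
  then show ?thesis
  proof cases
    case hv then show ?thesis using deg_HV by simp
  next
    case tin then show ?thesis using deg_TIn_int deg_TIn_leaf[OF lab b1]
      by (cases "d < b") (auto simp: le_less)
  next
    case tout then show ?thesis using deg_TOut_int deg_TOut_leaf[OF lab b1]
      by (cases "d < b") (auto simp: le_less)
  next
    case aux then show ?thesis using deg_Aux by simp
  qed
qed

lemma deg_wit:
  assumes b1: "1 \<le> b" and l1: "1 \<le> l"
  shows "TOut 0 (replicate l 0) 0 0 \<in> GV b l" "degree (GE b l \<sigma>) (TOut 0 (replicate l 0) 0 0) = 3"
proof -
  define r where "r = replicate l (0::nat)"
  have vr: "validj b l r" by (simp add: r_def validj_def)
  show "TOut 0 (replicate l 0) 0 0 \<in> GV b l" using vr l1 unfolding r_def GV_def by auto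
  have "{u. (TOut 0 r 0 0,u) \<in> GB b l \<sigma> \<or> (u,TOut 0 r 0 0) \<in> GB b l \<sigma>} = {HV 0 r, TOut 0 r 1 0, TOut 0 r 1 1}"
  proof
    show "{u. (TOut 0 r 0 0,u) \<in> GB b l \<sigma> \<or> (u,TOut 0 r 0 0) \<in> GB b l \<sigma>} \<subseteq> {HV 0 r, TOut 0 r 1 0, TOut 0 r 1 1}"
      unfolding GB_def using b1 by (auto dest!: pn_TOut[OF sym] pn_TOut)
    show "{HV 0 r, TOut 0 r 1 0, TOut 0 r 1 1} \<subseteq> {u. (TOut 0 r 0 0,u) \<in> GB b l \<sigma> \<or> (u,TOut 0 r 0 0) \<in> GB b l \<sigma>}"
      unfolding GB_def using b1 l1 vr by auto
  qed
  then show "degree (GE b l \<sigma>) (TOut 0 (replicate l 0) 0 0) = 3"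
    by (simp add: nbr_def r_def)
qed


definition Vl :: "nat \<Rightarrow> nat \<Rightarrow> nat list set" where
  "Vl b l = {xs. set xs \<subseteq> {..<2^b} \<and> length xs = l}"

lemma Vl_iff: "j \<in> Vl b l \<longleftrightarrow> validj b l j"
  by (auto simp: Vl_def validj_def)

lemma Vl_fin: "finite (Vl b l)" unfolding Vl_def by (rule finite_lists_length_eq) simp
lemma Vl_card: "card (Vl b l) = (2^b)^l" unfolding Vl_def by (simp add: card_lists_length_eq)

lemma GV_sub: "GV b l \<subseteq>
    (\<lambda>(i,j). HV i j) ` ({..2*l} \<times> Vl b l)
  \<union> (\<lambda>(i,j,d,p). TIn i j d p) ` ({..2*l} \<times> Vl b l \<times> {..b} \<times> {..<2^b})
  \<union> (\<lambda>(i,j,d,p). TOut i j d p) ` ({..2*l} \<times> Vl b l \<times> {..b} \<times> {..<2^b})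
  \<union> (\<lambda>(i,j,x,t). Aux i j (j[cfun l i - 1 := x]) t) ` ({..<2*l} \<times> Vl b l \<times> {..<2^b} \<times> {..<Aconst b l + (2^b)^2})" (is "_ \<subseteq> ?R")
proof
  fix w assume w: "w \<in> GV b l"
  consider (hv) i j where "w = HV i j" "i \<le> 2*l" "validj b l j"
    | (tin) i j d p where "w = TIn i j d p" "0 < i" "i \<le> 2*l" "validj b l j" "d \<le> b" "p < 2^d"
    | (tout) i j d p where "w = TOut i j d p" "i < 2*l" "validj b l j" "d \<le> b" "p < 2^d"
    | (aux) i j j' t where "w = Aux i j j' t" "Hadj b l i j j'" "0 < t" "t < plen b l i j j'"
    using w unfolding GV_def by blast
  then show "w \<in> ?R"
  proof cases
    case hv then show ?thesis by (auto simp: Vl_iff)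
  next
    case tin
    have "p < 2^b" using tin by (meson order_less_le_trans power_increasing_iff one_less_numeral_iff semiring_norm(76))
    then have "w \<in> (\<lambda>(i,j,d,p). TIn i j d p) ` ({..2*l} \<times> Vl b l \<times> {..b} \<times> {..<2^b})"
      by (intro rev_image_eqI[of "(i,j,d,p)"]) (use tin in \<open>auto simp: Vl_iff\<close>)
    then show ?thesis by blast
  next
    case tout
    have "p < 2^b" using tout by (meson order_less_le_trans power_increasing_iff one_less_numeral_iff semiring_norm(76))
    then have "w \<in> (\<lambda>(i,j,d,p). TOut i j d p) ` ({..2*l} \<times> Vl b l \<times> {..b} \<times> {..<2^b})"
      by (intro rev_image_eqI[of "(i,j,d,p)"]) (use tout in \<open>auto simp: Vl_iff\<close>)
    then show ?thesis by blast
  next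
    case aux
    define c where "c = cfun l i - 1"
    have i2: "i < 2*l" and vj: "validj b l j" and vj': "validj b l j'" and agr: "\<forall>k<l. k \<noteq> c \<longrightarrow> j!k = j'!k"
      using aux by (auto simp: Hadj_def c_def)
    have cl: "c < l" using cfun_lt[OF i2] c_def by simp
    have jj: "j' = j[c := j'!c]"
      by (rule nth_equalityI) (use vj vj' agr cl in \<open>auto simp: validj_def nth_list_update\<close>)
    have x: "j'!c < 2^b" using validjD[OF vj' cl] .
    have "int (Hweight b l i j j') = int (Aconst b l) + (int (j!c) - int (j'!c))^2"
      using Hweight_int c_def by simp
    also have "\<dots> \<le> int (Aconst b l) + (2^b)^2" using sq_bound[OF validjD[OF vj cl] x] by simp
    finally have "int (Hweight b l i j j') \<le> int (Aconst b l + (2^b)^2)" by simp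
    then have "Hweight b l i j j' \<le> Aconst b l + (2^b)^2" by (simp only: of_nat_le_iff)
    then have "t < Aconst b l + (2^b)^2" using aux by (simp add: plen_def)
    then have "(i, j, j'!c, t) \<in> {..<2*l} \<times> Vl b l \<times> {..<2^b} \<times> {..<Aconst b l + (2^b)^2}"
      using i2 vj x by (simp add: Vl_iff)
    moreover have "w = (\<lambda>(i,j,x,t). Aux i j (j[cfun l i - 1 := x]) t) (i, j, j'!c, t)"
      using aux jj c_def by simp
    ultimately show ?thesis by blast
  qed
qed

lemma arith1: assumes "1 \<le> (l::nat)" "2 \<le> (s::nat)" shows "(2*l+1) + 2*(2*l+1)*s*s + 2*l*s*(3*l*s*s+s*s) \<le> 32*l*l*s*s*s"
proof -
  define q where "q = l*l*s*s*s"
  have s1: "1 \<le> s" using assms by simp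
  have "l*1*1*1*1 \<le> l*l*s*s*s" using assms s1 by (intro mult_le_mono) auto
  then have a: "l \<le> q" by (simp add: q_def)
  have "1*1*(l*s*s) \<le> l*s*(l*s*s)" using assms s1 by (intro mult_le_mono) auto
  then have b: "l*s*s \<le> q" by (simp add: q_def algebra_simps)
  have "1*(l*s*s*s) \<le> l*(l*s*s*s)" using assms s1 by (intro mult_le_mono) auto
  then have c: "l*s*s*s \<le> q" by (simp add: q_def algebra_simps)
  have "1*(s*s) \<le> l*(s*s)" using assms by (intro mult_le_mono) auto
  then have d: "s*s \<le> l*s*s" by (simp add: algebra_simps)
  have e: "(2*l+1) + 2*(2*l+1)*s*s + 2*l*s*(3*l*s*s+s*s) = 2*l + 1 + 4*(l*s*s) + 2*(s*s) + 6*q + 2*(l*s*s*s)"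
    by (simp add: q_def algebra_simps)
  have "32*l*l*s*s*s = 32 * q" by (simp add: q_def algebra_simps)
  then show ?thesis using e a b c d assms(1) by linarith
qed

lemma card_Un4: "card (A \<union> B \<union> C \<union> D) \<le> card A + card B + card C + card D"
proof -
  have "card (A \<union> B \<union> C \<union> D) \<le> card (A \<union> B \<union> C) + card D" by (rule card_Un_le)
  moreover have "card (A \<union> B \<union> C) \<le> card (A \<union> B) + card C" by (rule card_Un_le)
  moreover have "card (A \<union> B) \<le> card A + card B" by (rule card_Un_le)
  ultimately show ?thesis by linarith
qed

lemma GV_fin: "finite (GV b l)"
  by (rule finite_subset[OF GV_sub]) (auto intro!: finite_cartesian_product Vl_fin)

lemma GV_upper:
  assumes b1: "1 \<le> b" and l1: "1 \<le> l"
  shows "card (GV b l) \<le> 32 * l * l * 2^b * 2^b * 2^b * (2^b)^l"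
proof -
  define s where "s = (2::nat)^b"
  define X where "X = s^l"
  have s2: "2 \<le> s" using b1 unfolding s_def using power_increasing[of 1 b "2::nat"] by simp
  have bs: "b + 1 \<le> s" unfolding s_def by (rule b_pow)
  have VX: "card (Vl b l) = X" by (simp add: Vl_card X_def s_def)
  let ?D1 = "{..2*l} \<times> Vl b l"
  let ?D2 = "{..2*l} \<times> Vl b l \<times> {..b} \<times> {..<(2::nat)^b}"
  let ?D4 = "{..<2*l} \<times> Vl b l \<times> {..<(2::nat)^b} \<times> {..<Aconst b l + (2^b)^2}"
  have "card (GV b l) \<le> card ((\<lambda>(i,j). HV i j) ` ?D1 \<union> (\<lambda>(i,j,d,p). TIn i j d p) ` ?D2
        \<union> (\<lambda>(i,j,d,p). TOut i j d p) ` ?D2 \<union> (\<lambda>(i,j,x,t). Aux i j (j[cfun l i - 1 := x]) t) ` ?D4)"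
    by (rule card_mono[OF _ GV_sub]) (auto intro!: finite_cartesian_product Vl_fin)
  also have "\<dots> \<le> card ?D1 + card ?D2 + card ?D2 + card ?D4"
  proof -
    have f1: "finite ?D1" "finite ?D2" "finite ?D4" by (auto intro!: finite_cartesian_product Vl_fin)
    have i1: "card ((\<lambda>(i,j). HV i j) ` ?D1) \<le> card ?D1" by (rule card_image_le[OF f1(1)])
    have i2: "card ((\<lambda>(i,j,d,p). TIn i j d p) ` ?D2) \<le> card ?D2" by (rule card_image_le[OF f1(2)])
    have i3: "card ((\<lambda>(i,j,d,p). TOut i j d p) ` ?D2) \<le> card ?D2" by (rule card_image_le[OF f1(2)])
    have i4: "card ((\<lambda>(i,j,x,t). Aux i j (j[cfun l i - 1 := x]) t) ` ?D4) \<le> card ?D4" by (rule card_image_le[OF f1(3)])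
    note u = card_Un4[of "(\<lambda>(i,j). HV i j) ` ?D1" "(\<lambda>(i,j,d,p). TIn i j d p) ` ?D2"
       "(\<lambda>(i,j,d,p). TOut i j d p) ` ?D2" "(\<lambda>(i,j,x,t). Aux i j (j[cfun l i - 1 := x]) t) ` ?D4"]
    show ?thesis using u i1 i2 i3 i4 by linarith
  qed
  also have "\<dots> = (2*l+1)*X + 2*((2*l+1)*X*(b+1)*s) + 2*l*X*s*(3*l*s*s+s*s)"
  proof -
    have c2: "card {..<(2::nat)^b} = s" by (simp add: s_def)
    have cA: "card {..<Aconst b l + (2^b)^2} = 3*l*s*s+s*s" by (simp add: Aconst_def s_def power2_eq_square)
    show ?thesis by (simp only: card_cartesian_product VX c2 cA card_atMost) (simp add: algebra_simps)
  qed
  also have "\<dots> \<le> (2*l+1)*X + 2*((2*l+1)*X*s*s) + 2*l*X*s*(3*l*s*s+s*s)"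
    using bs by (intro add_mono mult_le_mono) auto
  also have "\<dots> = ((2*l+1) + 2*(2*l+1)*s*s + 2*l*s*(3*l*s*s+s*s)) * X"
    by (simp add: algebra_simps)
  also have "\<dots> \<le> (32*l*l*s*s*s) * X"
    by (rule mult_le_mono1[OF arith1[OF l1 s2]])
  finally show ?thesis by (simp add: s_def X_def)
qed

lemma GV_lower:
  assumes l1: "1 \<le> l"
  shows "l * 2^b * (2^b)^l \<le> card (GV b l)"
proof -
  have "(\<lambda>(i,j,p). TOut i j b p) ` ({..<l} \<times> Vl b l \<times> {..<(2::nat)^b}) \<subseteq> GV b l"
  proof
    fix x assume "x \<in> (\<lambda>(i,j,p). TOut i j b p) ` ({..<l} \<times> Vl b l \<times> {..<(2::nat)^b})"
    then obtain i j p where h: "x = TOut i j b p" "i < l" "validj b l j" "p < 2^b" by (auto simp: Vl_iff)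
    show "x \<in> GV b l" unfolding h(1) GV_def by (rule UnI1, rule UnI2) (use h in auto)
  qed
  moreover have "inj_on (\<lambda>(i,j,p). TOut i j b p) ({..<l} \<times> Vl b l \<times> {..<(2::nat)^b})"
    by (auto simp: inj_on_def)
  ultimately have "card ({..<l} \<times> Vl b l \<times> {..<(2::nat)^b}) \<le> card (GV b l)"
    using card_inj_on_le GV_fin by blast
  then show ?thesis by (simp add: card_cartesian_product Vl_card algebra_simps)
qed


definition Pairs :: "nat \<Rightarrow> nat \<Rightarrow> (nat list \<times> nat list) set" where
  "Pairs b l = {(a,a'). validj b l a \<and> validj b l a' \<and> (\<forall>k<l. even (a!k + a'!k))}"

lemma Pairs_fin: "finite (Pairs b l)"
proof -
  have "Pairs b l \<subseteq> Vl b l \<times> Vl b l" by (auto simp: Pairs_def Vl_iff)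
  then show ?thesis using Vl_fin finite_subset by blast
qed

lemma Pairs_card:
  assumes b1: "1 \<le> b"
  shows "(2^b)^l * (2^(b-1))^l \<le> card (Pairs b l)"
proof -
  define g where "g = (\<lambda>(a::nat list, z::nat list). (a, map (\<lambda>k. 2 * z!k + a!k mod 2) [0..<l]))"
  have bb: "2 * 2^(b-1) = (2::nat)^b"
  proof -
    have "b = Suc (b - 1)" using b1 by simp
    then show ?thesis by (metis power_Suc)
  qed
  have "g ` (Vl b l \<times> Vl (b-1) l) \<subseteq> Pairs b l"
  proof
    fix x assume "x \<in> g ` (Vl b l \<times> Vl (b-1) l)"
    then obtain a z where h: "x = g (a,z)" "validj b l a" "validj (b-1) l z" by (auto simp: Vl_iff)
    have "\<forall>y \<in> set (map (\<lambda>k. 2 * z!k + a!k mod 2) [0..<l]). y < 2^b"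
    proof
      fix y assume "y \<in> set (map (\<lambda>k. 2 * z!k + a!k mod 2) [0..<l])"
      then obtain k where k: "k < l" "y = 2 * z!k + a!k mod 2" by auto
      have "z!k < 2^(b-1)" using validjD[OF h(3) k(1)] .
      then show "y < 2^b" using k bb by (simp add: mod2_eq_if; linarith)
    qed
    then show "x \<in> Pairs b l" using h by (auto simp: Pairs_def g_def validj_def)
  qed
  moreover have "inj_on g (Vl b l \<times> Vl (b-1) l)"
  proof (rule inj_onI)
    fix x y assume x: "x \<in> Vl b l \<times> Vl (b-1) l" and y: "y \<in> Vl b l \<times> Vl (b-1) l" and e: "g x = g y"
    obtain a z a2 z2 where xy: "x = (a,z)" "y = (a2,z2)" by (cases x, cases y) auto
    have aa: "a = a2" and mm: "map (\<lambda>k. 2 * z!k + a!k mod 2) [0..<l] = map (\<lambda>k. 2 * z2!k + a2!k mod 2) [0..<l]"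
      using e xy unfolding g_def by (simp_all only: prod.case prod.inject, blast+)
    have lz: "length z = l" "length z2 = l" using x y xy by (auto simp: Vl_iff validj_def)
    have "z = z2"
    proof (rule nth_equalityI)
      show "length z = length z2" using lz by simp
      fix k assume "k < length z"
      then have k: "k < l" using lz by simp
      show "z!k = z2!k" using mm aa k by simp
    qed
    then show "x = y" using xy aa by simp
  qed
  ultimately have "card (Vl b l \<times> Vl (b-1) l) \<le> card (Pairs b l)"
    using card_inj_on_le Pairs_fin by blast
  then show ?thesis by (simp add: card_cartesian_product Vl_card)
qed

lemma hub_bound:
  assumes lab: "valid_labeling b l \<sigma>" and b1: "1 \<le> b" and l1: "1 \<le> l"
    and hl: "hub_labeling (GV b l) (GE b l \<sigma>) S"
  shows "card (Pairs b l) \<le> 2 * (\<Sum>v\<in>GV b l. card (S v))"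
proof -
  define E where "E = GE b l \<sigma>"
  define Q where "Q = (\<lambda>p w. w \<in> S (HV 0 (fst p)) \<inter> S (HV (2*l) (snd p)) \<and>
     gdist E (HV 0 (fst p)) w + gdist E w (HV (2*l) (snd p)) = gdist E (HV 0 (fst p)) (HV (2*l) (snd p)))"
  define hub where "hub = (\<lambda>p. SOME w. Q p w)"
  have SV: "\<forall>v\<in>GV b l. S v \<subseteq> GV b l" using hl by (simp add: hub_labeling_def)
  have hubP: "Q p (hub p) \<and> hub p \<in> GV b l \<and> Rt l (fst p) (snd p) (fst (own (hub p))) (snd (own (hub p)))"
    if p: "p \<in> Pairs b l" for p
  proof -
    obtain a a' where pa: "p = (a,a')" by (cases p)
    have va: "validj b l a" and va': "validj b l a'" and ev: "\<forall>k<l. even (a!k + a'!k)"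
      using p pa by (auto simp: Pairs_def)
    have uG: "HV 0 a \<in> GV b l" using va unfolding GV_def by auto
    have vG: "HV (2*l) a' \<in> GV b l" using va' unfolding GV_def by auto
    have "(HV 0 a, HV (2*l) a') \<in> E\<^sup>*" using reach_GV[OF va lab b1 vG] by (simp add: E_def)
    then have "\<exists>w. Q p w" using hl uG vG pa unfolding hub_labeling_def Q_def E_def by fastforce
    then have q: "Q p (hub p)" unfolding hub_def by (rule someI_ex)
    then have hG: "hub p \<in> GV b l" using SV uG pa unfolding Q_def by auto
    have "Rt l a a' (fst (own (hub p))) (snd (own (hub p)))"
      by (rule hubkey[OF va va' ev lab b1 l1 hG]) (use q pa in \<open>simp add: Q_def E_def\<close>)
    then show ?thesis using q hG pa by simp
  qed
  define Sig where "Sig = Sigma (GV b l) S"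
  have finS: "\<forall>v\<in>GV b l. finite (S v)" using SV GV_fin finite_subset by blast
  have cSig: "card Sig = (\<Sum>v\<in>GV b l. card (S v))" using GV_fin finS by (simp add: Sig_def)
  have fSig: "finite Sig" using GV_fin finS by (simp add: Sig_def)
  define P1 where "P1 = {p \<in> Pairs b l. fst (own (hub p)) \<le> l}"
  define P2 where "P2 = {p \<in> Pairs b l. \<not> fst (own (hub p)) \<le> l}"
  have "card P1 \<le> card Sig"
  proof (rule card_inj_on_le[OF _ _ fSig])
    show "inj_on (\<lambda>p. (HV (2*l) (snd p), hub p)) P1"
    proof (rule inj_onI)
      fix p q assume p: "p \<in> P1" and q: "q \<in> P1" and e: "(HV (2*l) (snd p), hub p) = (HV (2*l) (snd q), hub q)"
      have pP: "p \<in> Pairs b l" and qP: "q \<in> Pairs b l" using p q by (auto simp: P1_def)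
      have s: "snd p = snd q" and h: "hub p = hub q" using e by auto
      have "fst p = fst q"
        by (rule Rt_inj1[OF hubP[OF pP, THEN conjunct2, THEN conjunct2] ])
          (use hubP[OF qP] s h p pP qP in \<open>auto simp: P1_def Pairs_def validj_def\<close>)
      then show "p = q" using s by (simp add: prod_eq_iff)
    qed
    show "(\<lambda>p. (HV (2*l) (snd p), hub p)) ` P1 \<subseteq> Sig"
    proof
      fix x assume "x \<in> (\<lambda>p. (HV (2*l) (snd p), hub p)) ` P1"
      then obtain p where p: "p \<in> Pairs b l" "x = (HV (2*l) (snd p), hub p)" by (auto simp: P1_def)
      have "HV (2*l) (snd p) \<in> GV b l" using p unfolding Pairs_def GV_def by auto
      then show "x \<in> Sig" using hubP[OF p(1)] p unfolding Sig_def Q_def by auto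
    qed
  qed
  moreover have "card P2 \<le> card Sig"
  proof (rule card_inj_on_le[OF _ _ fSig])
    show "inj_on (\<lambda>p. (HV 0 (fst p), hub p)) P2"
    proof (rule inj_onI)
      fix p q assume p: "p \<in> P2" and q: "q \<in> P2" and e: "(HV 0 (fst p), hub p) = (HV 0 (fst q), hub q)"
      have pP: "p \<in> Pairs b l" and qP: "q \<in> Pairs b l" using p q by (auto simp: P2_def)
      have s: "fst p = fst q" and h: "hub p = hub q" using e by auto
      have "snd p = snd q"
        by (rule Rt_inj2[OF hubP[OF pP, THEN conjunct2, THEN conjunct2] ])
          (use hubP[OF qP] s h p pP qP in \<open>auto simp: P2_def Pairs_def validj_def\<close>)
      then show "p = q" using s by (simp add: prod_eq_iff)
    qed
    show "(\<lambda>p. (HV 0 (fst p), hub p)) ` P2 \<subseteq> Sig"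
    proof
      fix x assume "x \<in> (\<lambda>p. (HV 0 (fst p), hub p)) ` P2"
      then obtain p where p: "p \<in> Pairs b l" "x = (HV 0 (fst p), hub p)" by (auto simp: P2_def)
      have "HV 0 (fst p) \<in> GV b l" using p unfolding Pairs_def GV_def by auto
      then show "x \<in> Sig" using hubP[OF p(1)] p unfolding Sig_def Q_def by auto
    qed
  qed
  moreover have "card (Pairs b l) \<le> card P1 + card P2"
  proof -
    have "Pairs b l = P1 \<union> P2" by (auto simp: P1_def P2_def)
    then show ?thesis using card_Un_le by metis
  qed
  ultimately show ?thesis using cSig by linarith
qed


lemma final_nat:
  fixes P Sg N :: nat
  assumes b1: "1 \<le> b" and l1: "1 \<le> l"
    and h1: "P \<le> 2 * Sg" and h2: "(2^b)^l * (2^(b-1))^l \<le> P"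
    and h3: "N \<le> 32 * l * l * 2^b * 2^b * 2^b * (2^b)^l"
  shows "2^(b*l) * N \<le> 2^(9*b+9*l) * Sg"
proof -
  define T where "T = (2::nat)^(b*l)"
  have T1: "((2::nat)^b)^l = T" by (simp add: T_def power_mult)
  have "(2::nat)^(b-1) * 2 = 2^b" using b1 by (metis Suc_diff_1 le_less_trans less_numeral_extra(1) power_Suc2 not_le less_one)
  then have T2: "((2::nat)^(b-1))^l * 2^l = T" using T1 by (metis power_mult_distrib)
  have TT: "T * T \<le> 2 * Sg * 2^l"
  proof -
    have "T * T = (2^b)^l * (2^(b-1))^l * 2^l" using T1 T2 by (simp add: algebra_simps)
    also have "\<dots> \<le> P * 2^l" using h2 by simp
    also have "\<dots> \<le> 2 * Sg * 2^l" using h1 by simp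
    finally show ?thesis .
  qed
  have p3: "(2::nat)^(3*b) = 2^b*2^b*2^b" by (metis mult.commute power_mult power3_eq_cube)
  have N1: "N \<le> 32 * l * l * 2^(3*b) * T"
    using h3 T1 unfolding p3 by (simp add: algebra_simps)
  have c1: "(64::nat) \<le> 2^(6*b)"
  proof -
    have "(2::nat)^6 \<le> 2^(6*b)" using b1 by (intro power_increasing) auto
    then show ?thesis by simp
  qed
  have c2: "l * l \<le> (2::nat)^l * 2^l"
    using less_exp[of l] by (intro mult_le_mono) auto
  have c3: "(2::nat)^(6*b) * (2^l * 2^l) * 2^(3*b) * 2^l \<le> 2^(9*b+9*l)"
  proof -
    have "(2::nat)^(6*b) * (2^l * 2^l) * 2^(3*b) * 2^l = 2^(9*b + 3*l)"
      by (simp add: power_add[symmetric] algebra_simps)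
    also have "\<dots> \<le> 2^(9*b+9*l)" by (intro power_increasing) auto
    finally show ?thesis .
  qed
  have "T * N \<le> T * (32 * l * l * 2^(3*b) * T)" using N1 by simp
  also have "\<dots> = 32 * l * l * 2^(3*b) * (T * T)" by (simp add: algebra_simps)
  also have "\<dots> \<le> 32 * l * l * 2^(3*b) * (2 * Sg * 2^l)" using TT by simp
  also have "\<dots> = (64 * (l * l) * 2^(3*b) * 2^l) * Sg" by (simp add: algebra_simps)
  also have "\<dots> \<le> (2^(6*b) * (2^l * 2^l) * 2^(3*b) * 2^l) * Sg"
    using c1 c2 by (intro mult_le_mono) auto
  also have "\<dots> \<le> 2^(9*b+9*l) * Sg" using c3 by simp
  finally show ?thesis by (simp add: T_def)
qed

lemma upper_nat:
  assumes b1: "1 \<le> b" and l1: "1 \<le> l"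
  shows "32 * l * l * 2^b * 2^b * 2^b * (2^b)^l \<le> 2^(b*l) * 2^(8*b) * l^8"
proof -
  have c1: "(32::nat) * 2^(3*b) \<le> 2^(8*b)"
  proof -
    have "(32::nat) * 2^(3*b) = 2^(5 + 3*b)" by (simp add: power_add)
    also have "\<dots> \<le> 2^(8*b)" using b1 by (intro power_increasing) auto
    finally show ?thesis .
  qed
  have c2: "l * l \<le> l^8"
  proof -
    have "l^2 \<le> l^8" using l1 by (intro power_increasing) auto
    then show ?thesis by (simp add: power2_eq_square)
  qed
  have p3: "(2::nat)^(3*b) = 2^b*2^b*2^b" by (metis mult.commute power_mult power3_eq_cube)
  have "32 * l * l * 2^b * 2^b * 2^b * (2^b)^l = (32 * 2^(3*b)) * (l * l) * 2^(b*l)"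
    unfolding p3 by (simp add: power_mult algebra_simps)
  also have "\<dots> \<le> 2^(8*b) * l^8 * 2^(b*l)" using c1 c2 by (intro mult_le_mono) auto
  finally show ?thesis by (simp add: algebra_simps)
qed

lemma part1:
  assumes b1: "1 \<le> b" and l1: "1 \<le> l"
  shows "2 powr (real (b * l) + 1 * (real b + log 2 (real l))) \<le> real (card (GV b l))"
    "real (card (GV b l)) \<le> 2 powr (real (b * l) + 8 * (real b + log 2 (real l)))"
proof -
  have lp: "0 < real l" using l1 by simp
  have q1: "2 powr real (b*l) = (2::real)^(b*l)" by (rule powr_realpow) simp
  have q2: "2 powr real b = (2::real)^b" by (rule powr_realpow) simp
  have q3: "2 powr (log 2 (real l)) = real l" using lp by simp
  have e1: "2 powr (real (b * l) + 1 * (real b + log 2 (real l))) = real (2^(b*l) * 2^b * l)"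
    by (simp only: mult_1 powr_add q1 q2 q3) simp
  have "l * 2^b * (2^b)^l \<le> card (GV b l)" by (rule GV_lower[OF l1])
  then have "2^(b*l) * 2^b * l \<le> card (GV b l)" by (simp add: power_mult algebra_simps)
  then show "2 powr (real (b * l) + 1 * (real b + log 2 (real l))) \<le> real (card (GV b l))"
    unfolding e1 by (simp only: of_nat_le_iff)
  have r1: "(2 powr log 2 (real l)) powr 8 = 2 powr (8 * log 2 (real l))"
    using powr_powr[of 2 "log 2 (real l)" 8] by (simp only: mult.commute)
  have r2: "2 powr log 2 (real l) = real l" using lp by simp
  have "2 powr (8 * log 2 (real l)) = real l powr 8" using r1 r2 by metis
  also have "\<dots> = real (l^8)" using lp powr_realpow[of "real l" 8] by simp
  finally have e8: "2 powr (8 * log 2 (real l)) = real (l^8)" .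
  have e2: "2 powr (real (b * l) + 8 * (real b + log 2 (real l))) = real (2^(b*l) * 2^(8*b) * l^8)"
  proof -
    have "2 powr (real (b * l) + 8 * (real b + log 2 (real l)))
       = 2 powr real (b*l) * 2 powr real (8*b) * 2 powr (8 * log 2 (real l))"
      by (simp only: powr_add[symmetric]) (simp add: algebra_simps)
    also have "\<dots> = real (2^(b*l) * 2^(8*b) * l^8)"
    proof -
      have q4: "2 powr real (8*b) = (2::real)^(8*b)" by (rule powr_realpow) simp
      show ?thesis unfolding e8 q1 q4 by simp
    qed
    finally show ?thesis .
  qed
  have "card (GV b l) \<le> 2^(b*l) * 2^(8*b) * l^8"
    using GV_upper[OF b1 l1] upper_nat[OF b1 l1] by linarith
  then show "real (card (GV b l)) \<le> 2 powr (real (b * l) + 8 * (real b + log 2 (real l)))"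
    unfolding e2 by (simp only: of_nat_le_iff)
qed

lemma part2:
  assumes lab: "valid_labeling b l \<sigma>" and b1: "1 \<le> b" and l1: "1 \<le> l"
  shows "Max (degree (GE b l \<sigma>) ` GV b l) = 3"
proof (rule Max_eqI)
  show "finite (degree (GE b l \<sigma>) ` GV b l)" using GV_fin by simp
  show "\<And>y. y \<in> degree (GE b l \<sigma>) ` GV b l \<Longrightarrow> y \<le> 3" using deg_all[OF lab b1] by auto
  show "3 \<in> degree (GE b l \<sigma>) ` GV b l" using deg_wit(1)[OF b1 l1] deg_wit(2)[OF b1 l1, of \<sigma>] by (metis image_eqI)
qed

lemma part3:
  assumes lab: "valid_labeling b l \<sigma>" and b1: "1 \<le> b" and l1: "1 \<le> l"
    and hl: "hub_labeling (GV b l) (GE b l \<sigma>) S"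
  shows "(\<Sum>v\<in>GV b l. real (card (S v))) / real (card (GV b l))
            \<ge> 2 powr (real (b * l) - 9 * (real b + real l))"
proof -
  define Sg where "Sg = (\<Sum>v\<in>GV b l. card (S v))"
  define N where "N = card (GV b l)"
  have "0 < l * 2^b * (2^b)^l" using l1 by simp
  then have Npos: "0 < N" using GV_lower[OF l1, of b] unfolding N_def by linarith
  have key: "2^(b*l) * N \<le> 2^(9*b+9*l) * Sg"
    by (rule final_nat[OF b1 l1 hub_bound[OF lab b1 l1 hl] Pairs_card[OF b1] GV_upper[OF b1 l1], folded Sg_def N_def])
  have rS: "(\<Sum>v\<in>GV b l. real (card (S v))) = real Sg" by (simp add: Sg_def)
  have q1: "2 powr real (b*l) = (2::real)^(b*l)" by (rule powr_realpow) simp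
  have q2: "2 powr real (9*b+9*l) = (2::real)^(9*b+9*l)" by (rule powr_realpow) simp
  have "2 powr (real (b * l) - 9 * (real b + real l)) = 2 powr real (b*l) / 2 powr real (9*b+9*l)"
    by (simp only: powr_diff[symmetric]) (simp add: algebra_simps)
  then have ep: "2 powr (real (b * l) - 9 * (real b + real l)) = real (2^(b*l)) / real (2^(9*b+9*l))"
    unfolding q1 q2 by simp
  have "real (2^(b*l) * N) \<le> real (2^(9*b+9*l) * Sg)" using key by (simp only: of_nat_le_iff)
  then have "real (2^(b*l)) * real N \<le> real Sg * real (2^(9*b+9*l))" by (simp add: algebra_simps)
  then have "real (2^(b*l)) / real (2^(9*b+9*l)) \<le> real Sg / real N"
    using Npos by (simp add: divide_le_eq le_divide_eq field_simps)
  then show ?thesis unfolding rS ep N_def by simp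
qed

lemma inner:
  assumes b1: "1 \<le> b" and l1: "1 \<le> l" and lab: "valid_labeling b l \<sigma>"
  shows "(2 powr (real (b * l) + 1 * (real b + log 2 (real l))) \<le> real (card (GV b l)) \<and>
        real (card (GV b l)) \<le> 2 powr (real (b * l) + 8 * (real b + log 2 (real l)))) \<and>
       Max (degree (GE b l \<sigma>) ` GV b l) = 3 \<and>
       (\<forall>S. hub_labeling (GV b l) (GE b l \<sigma>) S \<longrightarrow>
          (\<Sum>v\<in>GV b l. real (card (S v))) / real (card (GV b l))
            \<ge> 2 powr (real (b * l) - 9 * (real b + real l)))"
  using part1[OF b1 l1] part2[OF lab b1 l1] part3[OF lab b1 l1] by blast

theorem theorem4:
  shows "\<exists>c1 c2 c3 :: real. c1 > 0 \<and> c2 > 0 \<and> c3 > 0 \<and>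
    (\<forall>(b::nat) (l::nat) \<sigma>. b \<ge> 1 \<longrightarrow> l \<ge> 1 \<longrightarrow> valid_labeling b l \<sigma> \<longrightarrow>
       (2 powr (real (b * l) + c1 * (real b + log 2 (real l))) \<le> real (card (GV b l)) \<and>
        real (card (GV b l)) \<le> 2 powr (real (b * l) + c2 * (real b + log 2 (real l)))) \<and>
       Max (degree (GE b l \<sigma>) ` GV b l) = 3 \<and>
       (\<forall>S. hub_labeling (GV b l) (GE b l \<sigma>) S \<longrightarrow>
          (\<Sum>v\<in>GV b l. real (card (S v))) / real (card (GV b l))
            \<ge> 2 powr (real (b * l) - c3 * (real b + real l))))"
  apply (rule exI[of _ "1::real"], rule exI[of _ "8::real"], rule exI[of _ "9::real"])
  using inner by simp

end
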